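(* Under the hypotheses and notation of the context (PQRS-form with $m\ge1$ and $S$ invertible self-adjoint), the scattering matrix admits, for all sufficiently large $k>0$, the convergent expansion $$\mathcal S(k)=-I^{(n)}+2M_Q\left(I^{(a)}+RR^*+QQ^*\right)^{-1}M_Q^*+2X(X^*X)^{-1}X^*+2X\sum_{j=1}^\infty\left(\tfrac{1}{\mathrm ik}\right)^j\left[(X^*X)^{-1}S\right]^j(X^*X)^{-1}X^*,$$ and $$\lim_{k\to\infty}\mathcal S(k)=I^{(n)}-2M_P\left[I^{(b)}+P^*P+(RP-Q)^*(RP-Q)\right]^{-1}M_P^*.$$
   Context: $I^{(j)}$ denotes the $j\times j$ identity matrix. Let $0\le r_A,r_B\le n$ with $m=r_A+r_B-n\ge1$, $a=n-r_A$, $b=n-r_B$, $S\in\mathbb C^{m\times m}$ invertible self-adjoint, $P\in\mathbb C^{m\times b}$, $Q\in\mathbb C^{a\times b}$, $R\in\mathbb C^{a\times m}$. The vertex coupling is given by the PQRS-form $B_{PQRS}\Psi'=A_{PQRS}\Psi$ with (block sizes $m,a,b$) $$B_{PQRS}=\begin{pmatrix} I^{(m)} & 0 & P\\ R & I^{(a)} & Q\\ 0&0&0\end{pmatrix},\qquad A_{PQRS}=\begin{pmatrix} S & -SR^* & 0\\ 0&0&0\\ -P^* & (RP-Q)^* & I^{(b)}\end{pmatrix};$$ its scattering matrix is $\mathcal S(k)=-(A+\mathrm ikB)^{-1}(A-\mathrm ikB)$, $k>0$, with $A=-A_{PQRS}$, $B=B_{PQRS}$. Further, $$M_P=\begin{pmatrix}-P\\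 RP-Q\\ I^{(b)}\end{pmatrix},\quad M_Q=\begin{pmatrix}R^*\\ I^{(a)}\\ Q^*\end{pmatrix},\quad X=\begin{pmatrix}I^{(m)}\\0\\P^*\end{pmatrix}-M_Q\left(I^{(a)}+RR^*+QQ^*\right)^{-1}(R+QP^* ).$$ *)

theory Defs
  imports "HOL-Analysis.Analysis" "Jordan_Normal_Form.Schur_Decomposition"
begin

text \<open>Inverse of a square matrix (meaningful when the matrix is invertible).\<close>
definition minv :: "complex mat \<Rightarrow> complex mat" where
  "minv A = (SOME B. B \<in> carrier_mat (dim_row A) (dim_row A) \<and>
                     A * B = 1\<^sub>m (dim_row A) \<and> B * A = 1\<^sub>m (dim_row A))"

definition hcat :: "'a::zero mat \<Rightarrow> 'a mat \<Rightarrow> 'a mat" where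
  "hcat A B = four_block_mat A B (0\<^sub>m 0 (dim_col A)) (0\<^sub>m 0 (dim_col B))"

definition vcat :: "'a::zero mat \<Rightarrow> 'a mat \<Rightarrow> 'a mat" where
  "vcat A B = four_block_mat A (0\<^sub>m (dim_row A) 0) B (0\<^sub>m (dim_row B) 0)"

definition block3 ::
  "'a::zero mat \<Rightarrow> 'a mat \<Rightarrow> 'a mat \<Rightarrow> 'a mat \<Rightarrow> 'a mat \<Rightarrow> 'a mat \<Rightarrow>
   'a mat \<Rightarrow> 'a mat \<Rightarrow> 'a mat \<Rightarrow> 'a mat" where
  "block3 A11 A12 A13 A21 A22 A23 A31 A32 A33 =
     vcat (hcat (hcat A11 A12) A13) (vcat (hcat (hcat A21 A22) A23) (hcat (hcat A31 A32) A33))"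

definition col3 :: "'a::zero mat \<Rightarrow> 'a mat \<Rightarrow> 'a mat \<Rightarrow> 'a mat" where
  "col3 A1 A2 A3 = vcat A1 (vcat A2 A3)"

definition B_PQRS :: "nat \<Rightarrow> nat \<Rightarrow> nat \<Rightarrow> complex mat \<Rightarrow> complex mat \<Rightarrow> complex mat \<Rightarrow> complex mat" where
  "B_PQRS m a b P Q R =
     block3 (1\<^sub>m m) (0\<^sub>m m a) P
            R (1\<^sub>m a) Q
            (0\<^sub>m b m) (0\<^sub>m b a) (0\<^sub>m b b)"

definition A_PQRS :: "nat \<Rightarrow> nat \<Rightarrow> nat \<Rightarrow> complex mat \<Rightarrow> complex mat \<Rightarrow> complex mat \<Rightarrow> complex mat \<Rightarrow> complex mat" where
  "A_PQRS m a b P Q R S =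
     block3 S (- (S * mat_adjoint R)) (0\<^sub>m m b)
            (0\<^sub>m a m) (0\<^sub>m a a) (0\<^sub>m a b)
            (- mat_adjoint P) (mat_adjoint (R * P - Q)) (1\<^sub>m b)"

definition scat :: "nat \<Rightarrow> nat \<Rightarrow> nat \<Rightarrow> complex mat \<Rightarrow> complex mat \<Rightarrow> complex mat \<Rightarrow> complex mat \<Rightarrow> real \<Rightarrow> complex mat" where
  "scat m a b P Q R S k =
     (let A = - A_PQRS m a b P Q R S; B = B_PQRS m a b P Q R
      in - (minv (A + (\<i> * complex_of_real k) \<cdot>\<^sub>m B) * (A - (\<i> * complex_of_real k) \<cdot>\<^sub>m B)))"

definition M_P :: "nat \<Rightarrow> complex mat \<Rightarrow> complex mat \<Rightarrow> complex mat \<Rightarrow> complex mat" where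
  "M_P b P Q R = col3 (- P) (R * P - Q) (1\<^sub>m b)"

definition M_Q :: "nat \<Rightarrow> complex mat \<Rightarrow> complex mat \<Rightarrow> complex mat \<Rightarrow> complex mat" where
  "M_Q a P Q R = col3 (mat_adjoint R) (1\<^sub>m a) (mat_adjoint Q)"

definition X_mat :: "nat \<Rightarrow> nat \<Rightarrow> nat \<Rightarrow> complex mat \<Rightarrow> complex mat \<Rightarrow> complex mat \<Rightarrow> complex mat" where
  "X_mat m a b P Q R =
     col3 (1\<^sub>m m) (0\<^sub>m a m) (mat_adjoint P)
     - M_Q a P Q R * minv (1\<^sub>m a + R * mat_adjoint R + Q * mat_adjoint Q) * (R + Q * mat_adjoint P)"

end

theory Submission
  imports Defs
begin


lemma adj_dim[simp]: "dim_row (mat_adjoint A) = dim_col A" "dim_col (mat_adjoint A) = dim_row A"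
  by (auto simp: mat_adjoint_def mat_of_rows_def)

lemma adj_index[simp]: "i < dim_col A \<Longrightarrow> j < dim_row A \<Longrightarrow> mat_adjoint A $$ (i,j) = cnj (A $$ (j,i))"
  by (auto simp: mat_adjoint_def mat_of_rows_def)

lemma mult_entry: "i < dim_row A \<Longrightarrow> j < dim_col B \<Longrightarrow> dim_col A = dim_row B \<Longrightarrow>
   (A * B) $$ (i,j) = (\<Sum>k<dim_row B. A $$ (i,k) * B $$ (k,j))"
  by (simp add: scalar_prod_def atLeast0LessThan)

lemma adj_adj[simp]: "mat_adjoint (mat_adjoint (A::complex mat)) = A"
  by (rule eq_matI, auto)

lemma adj_mult: "dim_col A = dim_row B \<Longrightarrow> mat_adjoint ((A::complex mat) * B) = mat_adjoint B * mat_adjoint A"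
  by (rule eq_matI, auto simp: scalar_prod_def mult.commute)

lemma adj_add[simp]: "dim_row A = dim_row B \<Longrightarrow> dim_col A = dim_col B \<Longrightarrow> mat_adjoint ((A::complex mat) + B) = mat_adjoint A + mat_adjoint B"
  by (rule eq_matI, auto)

lemma adj_minus[simp]: "dim_row A = dim_row B \<Longrightarrow> dim_col A = dim_col B \<Longrightarrow> mat_adjoint ((A::complex mat) - B) = mat_adjoint A - mat_adjoint B"
  by (rule eq_matI, auto)

lemma adj_uminus[simp]: "mat_adjoint (- (A::complex mat)) = - mat_adjoint A"
  by (rule eq_matI, auto)

lemma adj_smult[simp]: "mat_adjoint (c \<cdot>\<^sub>m (A::complex mat)) = cnj c \<cdot>\<^sub>m mat_adjoint A"
  by (rule eq_matI, auto)

lemma adj_one[simp]: "mat_adjoint (1\<^sub>m n :: complex mat) = 1\<^sub>m n"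
  by (rule eq_matI, auto)

lemma adj_zero[simp]: "mat_adjoint (0\<^sub>m r c :: complex mat) = 0\<^sub>m c r"
  by (rule eq_matI, auto)

lemma massoc: "dim_col A = dim_row B \<Longrightarrow> dim_col B = dim_row C \<Longrightarrow> (A::complex mat) * B * C = A * (B * C)"
  by (rule assoc_mult_mat[of A "dim_row A" "dim_col A" B "dim_col B" C "dim_col C"], auto)

lemma mdistl: "dim_col A = dim_row B \<Longrightarrow> dim_row B = dim_row C \<Longrightarrow> dim_col B = dim_col C \<Longrightarrow>
  (A::complex mat) * (B + C) = A * B + A * C"
  by (rule mult_add_distrib_mat[of A "dim_row A" "dim_col A" B "dim_col B"], auto)

lemma mdistr: "dim_row A = dim_row B \<Longrightarrow> dim_col A = dim_col B \<Longrightarrow> dim_col A = dim_row C \<Longrightarrow>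
  ((A::complex mat) + B) * C = A * C + B * C"
  by (rule add_mult_distrib_mat[of A "dim_row A" "dim_col A" B C "dim_col C"], auto)

lemma mdistl_minus: "dim_col A = dim_row B \<Longrightarrow> dim_row B = dim_row C \<Longrightarrow> dim_col B = dim_col C \<Longrightarrow>
  (A::complex mat) * (B - C) = A * B - A * C"
  by (rule eq_matI, auto simp: scalar_prod_def sum_subtractf right_diff_distrib)

lemma mdistr_minus: "dim_row A = dim_row B \<Longrightarrow> dim_col A = dim_col B \<Longrightarrow> dim_col A = dim_row C \<Longrightarrow>
  ((A::complex mat) - B) * C = A * C - B * C"
  by (rule eq_matI, auto simp: scalar_prod_def sum_subtractf left_diff_distrib)

lemma msmultl: "dim_col A = dim_row B \<Longrightarrow> (c \<cdot>\<^sub>m (A::complex mat)) * B = c \<cdot>\<^sub>m (A * B)"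
  by (rule eq_matI, auto simp: scalar_prod_def sum_distrib_left mult.assoc)

lemma msmultr: "dim_col A = dim_row B \<Longrightarrow> (A::complex mat) * (c \<cdot>\<^sub>m B) = c \<cdot>\<^sub>m (A * B)"
  by (rule eq_matI, auto simp: scalar_prod_def sum_distrib_left mult.assoc mult.left_commute)

lemma mzl: "dim_row A = c \<Longrightarrow> 0\<^sub>m r c * (A::complex mat) = 0\<^sub>m r (dim_col A)" by simp
lemma mzr: "dim_col A = r \<Longrightarrow> (A::complex mat) * 0\<^sub>m r c = 0\<^sub>m (dim_row A) c" by simp


lemma vcat_dim[simp]: "dim_row (vcat A B) = dim_row A + dim_row B" "dim_col (vcat A B) = dim_col A"
  by (auto simp: vcat_def)
lemma hcat_dim[simp]: "dim_row (hcat A B) = dim_row A" "dim_col (hcat A B) = dim_col A + dim_col B"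
  by (auto simp: hcat_def)

lemma vcat_index: "i < dim_row A + dim_row B \<Longrightarrow> j < dim_col A \<Longrightarrow>
  vcat A B $$ (i,j) = (if i < dim_row A then A $$ (i,j) else B $$ (i - dim_row A, j))"
  by (auto simp: vcat_def)
lemma hcat_index: "i < dim_row A \<Longrightarrow> j < dim_col A + dim_col B \<Longrightarrow>
  hcat A B $$ (i,j) = (if j < dim_col A then A $$ (i,j) else B $$ (i, j - dim_col A))"
  by (auto simp: hcat_def)

lemma row_vcat: "i < dim_row A + dim_row B \<Longrightarrow> dim_col A = dim_col B \<Longrightarrow>
  row (vcat A B) i = (if i < dim_row A then row A i else row B (i - dim_row A))"
  by (rule eq_vecI, auto simp: vcat_index)

lemma vcat_mult: assumes "dim_col A = dim_col B" shows "(vcat A B :: complex mat) * C = vcat (A * C) (B * C)"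
proof (rule eq_matI)
  fix i j assume i: "i < dim_row (vcat (A*C) (B*C))" and j: "j < dim_col (vcat (A*C) (B*C))"
  then have "(vcat A B * C)$$(i,j) = row (vcat A B) i \<bullet> col C j" by simp
  also have "\<dots> = (if i < dim_row A then row A i \<bullet> col C j else row B (i - dim_row A) \<bullet> col C j)"
    using i assms by (simp add: row_vcat)
  also have "\<dots> = vcat (A*C) (B*C) $$ (i,j)" using i j by (simp add: vcat_index)
  finally show "(vcat A B * C)$$(i,j) = vcat (A*C) (B*C) $$ (i,j)" .
qed simp_all

lemma row_hcat: assumes "i < dim_row A" "dim_row A = dim_row B" shows "row (hcat A B) i = row A i @\<^sub>v row B i"
proof (rule eq_vecI)
  fix k assume k: "k < dim_vec (row A i @\<^sub>v row B i)"
  then show "row (hcat A B) i $ k = (row A i @\<^sub>v row B i) $ k"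
    using assms by (simp add: hcat_index)
qed simp
lemma col_vcat: assumes "j < dim_col A" "dim_col A = dim_col B" shows "col (vcat A B) j = col A j @\<^sub>v col B j"
proof (rule eq_vecI)
  fix k assume k: "k < dim_vec (col A j @\<^sub>v col B j)"
  then show "col (vcat A B) j $ k = (col A j @\<^sub>v col B j) $ k"
    using assms by (simp add: vcat_index)
qed simp

lemma sp_app: "dim_vec v1 = dim_vec w1 \<Longrightarrow> dim_vec v2 = dim_vec w2 \<Longrightarrow> scalar_prod (v1 @\<^sub>v v2) (w1 @\<^sub>v w2) = scalar_prod v1 w1 + scalar_prod v2 (w2::complex vec)"
  apply (rule scalar_prod_append[of _ "dim_vec v1" _ "dim_vec v2"])
  by (intro carrier_vecI; simp)+

lemma hcat_vcat_mult: assumes "dim_row A = dim_row B" "dim_col C = dim_col D" "dim_col A = dim_row C"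
  "dim_col B = dim_row D" shows "hcat A B * vcat C D = A * C + B * (D :: complex mat)"
proof (rule eq_matI)
  fix i j assume i: "i < dim_row (A * C + B * D)" and j: "j < dim_col (A * C + B * D)"
  have ii: "i < dim_row A" using i assms(1) by simp
  have jj: "j < dim_col C" using j assms(2) by simp
  have "(hcat A B * vcat C D) $$ (i,j) = row (hcat A B) i \<bullet> col (vcat C D) j"
    by (rule index_mult_mat(1), simp only: hcat_dim ii, simp only: vcat_dim jj)
  also have "\<dots> = (row A i @\<^sub>v row B i) \<bullet> (col C j @\<^sub>v col D j)"
    by (simp only: row_hcat[OF ii assms(1)] col_vcat[OF jj assms(2)])
  also have "\<dots> = row A i \<bullet> col C j + row B i \<bullet> col D j"
    by (rule sp_app, simp, simp add: assms(3), simp add: assms(4))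
  also have "\<dots> = (A * C) $$ (i,j) + (B * D) $$ (i,j)"
    using ii jj assms(1,2) by simp
  also have "\<dots> = (A * C + B * D) $$ (i,j)" 
    by (rule index_add_mat(1)[symmetric], insert ii jj assms(1,2), simp_all)
  finally show "(hcat A B * vcat C D) $$ (i,j) = (A * C + B * D) $$ (i,j)" .
next
  show "dim_row (hcat A B * vcat C D) = dim_row (A * C + B * D)" using assms(1) by simp
  show "dim_col (hcat A B * vcat C D) = dim_col (A * C + B * D)" using assms(2) by simp
qed

lemma adj_vcat: "dim_col A = dim_col B \<Longrightarrow> mat_adjoint (vcat A B) = hcat (mat_adjoint A) (mat_adjoint (B::complex mat))"
  by (rule eq_matI, auto simp: vcat_index hcat_index)

lemma vcat_add: "dim_row A = dim_row C \<Longrightarrow> dim_col A = dim_col C \<Longrightarrow> dim_row B = dim_row D \<Longrightarrow>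
  dim_col B = dim_col D \<Longrightarrow> dim_col A = dim_col B \<Longrightarrow>
  vcat A B + vcat C D = vcat (A + C) (B + (D :: complex mat))"
  by (rule eq_matI, auto simp: vcat_index)
lemma vcat_minus: "dim_row A = dim_row C \<Longrightarrow> dim_col A = dim_col C \<Longrightarrow> dim_row B = dim_row D \<Longrightarrow>
  dim_col B = dim_col D \<Longrightarrow> dim_col A = dim_col B \<Longrightarrow>
  vcat A B - vcat C D = vcat (A - C) (B - (D :: complex mat))"
  by (rule eq_matI, auto simp: vcat_index)
lemma vcat_uminus: "dim_col A = dim_col B \<Longrightarrow> - vcat A B = vcat (- A) (- (B :: complex mat))"
  by (rule eq_matI, auto simp: vcat_index)
lemma vcat_smult: "dim_col A = dim_col B \<Longrightarrow> c \<cdot>\<^sub>m vcat A B = vcat (c \<cdot>\<^sub>m A) (c \<cdot>\<^sub>m (B :: complex mat))"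
  by (rule eq_matI, auto simp: vcat_index)
lemma vcat_zero: "vcat (0\<^sub>m r1 c) (0\<^sub>m r2 c) = (0\<^sub>m (r1 + r2) c :: complex mat)"
  by (rule eq_matI, auto simp: vcat_index)
lemma vcat_assoc: "dim_col A = dim_col B \<Longrightarrow> dim_col B = dim_col C \<Longrightarrow> vcat A (vcat B C) = vcat (vcat A B) (C :: complex mat)"
  by (rule eq_matI, auto simp: vcat_index)

definition hcat3 :: "complex mat \<Rightarrow> complex mat \<Rightarrow> complex mat \<Rightarrow> complex mat" where
  "hcat3 A B C = hcat (hcat A B) C"

lemma col3_dim[simp]: "dim_row (col3 A B C) = dim_row A + dim_row B + dim_row C" "dim_col (col3 A B C) = dim_col A"
  by (auto simp: col3_def)
lemma hcat3_dim[simp]: "dim_row (hcat3 A B C) = dim_row A" "dim_col (hcat3 A B C) = dim_col A + dim_col B + dim_col C"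
  by (auto simp: hcat3_def)

lemma block3_col3: "block3 A11 A12 A13 A21 A22 A23 A31 A32 A33 = col3 (hcat3 A11 A12 A13) (hcat3 A21 A22 A23) (hcat3 A31 A32 A33)"
  by (simp add: block3_def col3_def hcat3_def)

lemma col3_mult: "dim_col (A::complex mat) = dim_col B \<Longrightarrow> dim_col B = dim_col C \<Longrightarrow>
  col3 A B C * M = col3 (A * M) (B * M) (C * M)"
  by (simp add: col3_def vcat_mult)

lemma hcat3_col3: "dim_row (A::complex mat) = dim_row B \<Longrightarrow> dim_row B = dim_row C \<Longrightarrow>
  dim_col X = dim_col Y \<Longrightarrow> dim_col Y = dim_col Z \<Longrightarrow>
  dim_col A = dim_row X \<Longrightarrow> dim_col B = dim_row Y \<Longrightarrow> dim_col C = dim_row Z \<Longrightarrow>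
  hcat3 A B C * col3 X Y Z = A * X + B * Y + C * Z"
  unfolding hcat3_def col3_def
  apply (subst vcat_assoc, simp, simp)
  apply (subst hcat_vcat_mult, simp_all)
  apply (subst hcat_vcat_mult, simp_all)
  done

lemma adj_col3: "dim_col (A::complex mat) = dim_col B \<Longrightarrow> dim_col B = dim_col C \<Longrightarrow>
  mat_adjoint (col3 A B C) = hcat3 (mat_adjoint A) (mat_adjoint B) (mat_adjoint C)"
  unfolding hcat3_def col3_def
  apply (subst vcat_assoc, simp, simp)
  apply (subst adj_vcat, simp)
  apply (subst adj_vcat, simp)
  apply simp
  done

lemma col3_add: "dim_row (A::complex mat) = dim_row A' \<Longrightarrow> dim_row B = dim_row B' \<Longrightarrow> dim_row C = dim_row C' \<Longrightarrow>
  dim_col A = dim_col B \<Longrightarrow> dim_col B = dim_col C \<Longrightarrow> dim_col A' = dim_col B' \<Longrightarrow> dim_col B' = dim_col C' \<Longrightarrow>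
  dim_col A = dim_col A' \<Longrightarrow>
  col3 A B C + col3 A' B' C' = col3 (A + A') (B + B') (C + C')"
  unfolding col3_def by (simp add: vcat_add)
lemma col3_minus: "dim_row (A::complex mat) = dim_row A' \<Longrightarrow> dim_row B = dim_row B' \<Longrightarrow> dim_row C = dim_row C' \<Longrightarrow>
  dim_col A = dim_col B \<Longrightarrow> dim_col B = dim_col C \<Longrightarrow> dim_col A' = dim_col B' \<Longrightarrow> dim_col B' = dim_col C' \<Longrightarrow>
  dim_col A = dim_col A' \<Longrightarrow>
  col3 A B C - col3 A' B' C' = col3 (A - A') (B - B') (C - C')"
  unfolding col3_def by (simp add: vcat_minus)
lemma col3_uminus: "dim_col (A::complex mat) = dim_col B \<Longrightarrow> dim_col B = dim_col C \<Longrightarrow>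
  - col3 A B C = col3 (- A) (- B) (- C)"
  unfolding col3_def by (simp add: vcat_uminus)
lemma col3_smult: "dim_col (A::complex mat) = dim_col B \<Longrightarrow> dim_col B = dim_col C \<Longrightarrow>
  c \<cdot>\<^sub>m col3 A B C = col3 (c \<cdot>\<^sub>m A) (c \<cdot>\<^sub>m B) (c \<cdot>\<^sub>m C)"
  unfolding col3_def by (simp add: vcat_smult)
lemma col3_zero: "col3 (0\<^sub>m r1 c :: complex mat) (0\<^sub>m r2 c) (0\<^sub>m r3 c) = 0\<^sub>m (r1 + r2 + r3) c"
  unfolding col3_def by (simp add: vcat_zero add.assoc)
lemma col3_eq: "col3 A B C = col3 A' B' C' \<longleftrightarrow> (A = A' \<and> B = B' \<and> C = C') \<or> col3 A B C = col3 A' B' C'"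
  by auto


locale pq =
  fixes m a b :: nat and P Q R S :: "complex mat"
  assumes Sc: "S \<in> carrier_mat m m" and Sh: "mat_adjoint S = S"
    and Pc: "P \<in> carrier_mat m b" and Qc: "Q \<in> carrier_mat a b" and Rc: "R \<in> carrier_mat a m"
begin

definition "V = R + Q * mat_adjoint P"
definition "Wi = 1\<^sub>m a + R * mat_adjoint R + Q * mat_adjoint Q"
definition "Tq = R * P - Q"
definition "D = 1\<^sub>m b + mat_adjoint P * P + mat_adjoint Tq * Tq"
definition "e = col3 (1\<^sub>m m) (0\<^sub>m a m) (mat_adjoint P)"
definition "MQ = M_Q a P Q R"
definition "MP = M_P b P Q R"
definition "Ap = A_PQRS m a b P Q R S"
definition "Bp = B_PQRS m a b P Q R"
definition "e1 = (col3 (1\<^sub>m m) (0\<^sub>m a m) (0\<^sub>m b m) :: complex mat)"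
definition "e2 = (col3 (0\<^sub>m m a) (1\<^sub>m a) (0\<^sub>m b a) :: complex mat)"
definition "e3 = (col3 (0\<^sub>m m b) (0\<^sub>m a b) (1\<^sub>m b) :: complex mat)"
definition "Zp = P + mat_adjoint R * Tq"

lemma dimP[simp]: "dim_row P = m" "dim_col P = b" using Pc by auto
lemma dimQ[simp]: "dim_row Q = a" "dim_col Q = b" using Qc by auto
lemma dimR[simp]: "dim_row R = a" "dim_col R = m" using Rc by auto
lemma dimS[simp]: "dim_row S = m" "dim_col S = m" using Sc by auto
lemma dimV[simp]: "dim_row V = a" "dim_col V = m" by (auto simp: V_def)
lemma dimWi[simp]: "dim_row Wi = a" "dim_col Wi = a" by (auto simp: Wi_def)
lemma dimTq[simp]: "dim_row Tq = a" "dim_col Tq = b" by (auto simp: Tq_def)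
lemma dimD[simp]: "dim_row D = b" "dim_col D = b" by (auto simp: D_def)
lemma dime[simp]: "dim_row e = m + a + b" "dim_col e = m" by (auto simp: e_def)
lemma dimMQ[simp]: "dim_row MQ = m + a + b" "dim_col MQ = a" by (auto simp: MQ_def M_Q_def)
lemma dimMP[simp]: "dim_row MP = m + a + b" "dim_col MP = b" by (auto simp: MP_def M_P_def)
lemma dimAp[simp]: "dim_row Ap = m + a + b" "dim_col Ap = m + a + b"
  by (auto simp: Ap_def A_PQRS_def block3_col3 hcat3_def[symmetric])
lemma dimBp[simp]: "dim_row Bp = m + a + b" "dim_col Bp = m + a + b"
  by (auto simp: Bp_def B_PQRS_def block3_col3 hcat3_def[symmetric])
lemma dime1[simp]: "dim_row e1 = m + a + b" "dim_col e1 = m" by (auto simp: e1_def)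
lemma dime2[simp]: "dim_row e2 = m + a + b" "dim_col e2 = a" by (auto simp: e2_def)
lemma dime3[simp]: "dim_row e3 = m + a + b" "dim_col e3 = b" by (auto simp: e3_def)
lemma dimZp[simp]: "dim_row Zp = m" "dim_col Zp = b" by (auto simp: Zp_def)

lemma SS: "mat_adjoint S = S" by (rule Sh)
lemma adjV: "mat_adjoint V = mat_adjoint R + P * mat_adjoint Q"
  by (simp add: V_def adj_mult)
lemma adjTq: "mat_adjoint Tq = mat_adjoint P * mat_adjoint R - mat_adjoint Q"
  by (simp add: Tq_def adj_mult)
lemma adjWi: "mat_adjoint Wi = Wi"
  by (simp add: Wi_def adj_mult)
lemma adjD: "mat_adjoint D = D"
  by (simp add: D_def adj_mult)

lemma adjMQ: "mat_adjoint MQ = hcat3 R (1\<^sub>m a) Q"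
  by (simp add: MQ_def M_Q_def adj_col3)
lemma adjMP: "mat_adjoint MP = hcat3 (- mat_adjoint P) (mat_adjoint Tq) (1\<^sub>m b)"
  by (simp add: MP_def M_P_def adj_col3 Tq_def)
lemma adje: "mat_adjoint e = hcat3 (1\<^sub>m m) (0\<^sub>m m a) P"
  by (simp add: e_def adj_col3)
lemma adje1: "mat_adjoint e1 = hcat3 (1\<^sub>m m) (0\<^sub>m m a) (0\<^sub>m m b)"
  by (simp add: e1_def adj_col3)
lemma adje2: "mat_adjoint e2 = hcat3 (0\<^sub>m a m) (1\<^sub>m a) (0\<^sub>m a b)"
  by (simp add: e2_def adj_col3)
lemma adje3: "mat_adjoint e3 = hcat3 (0\<^sub>m b m) (0\<^sub>m b a) (1\<^sub>m b)"
  by (simp add: e3_def adj_col3)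

lemma MQ_col: "MQ = col3 (mat_adjoint R) (1\<^sub>m a) (mat_adjoint Q)" by (simp add: MQ_def M_Q_def)
lemma MP_col: "MP = col3 (- P) Tq (1\<^sub>m b)" by (simp add: MP_def M_P_def Tq_def)

lemma B1: "mat_adjoint MQ * MQ = Wi"
proof -
  have "mat_adjoint MQ * MQ = R * mat_adjoint R + 1\<^sub>m a * 1\<^sub>m a + Q * mat_adjoint Q"
    unfolding adjMQ unfolding MQ_col by (rule hcat3_col3) simp_all
  then show ?thesis by (simp add: Wi_def, intro eq_matI, simp_all)
qed

lemma B2: "mat_adjoint e * MQ = mat_adjoint V"
proof -
  have "mat_adjoint e * MQ = 1\<^sub>m m * mat_adjoint R + 0\<^sub>m m a * 1\<^sub>m a + P * mat_adjoint Q"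
    unfolding adje MQ_col by (rule hcat3_col3) simp_all
  then show ?thesis by (simp add: adjV, intro eq_matI, simp_all)
qed

lemma B3: "mat_adjoint MQ * MP = 0\<^sub>m a b"
proof -
  have "mat_adjoint MQ * MP = R * (- P) + 1\<^sub>m a * Tq + Q * 1\<^sub>m b"
    unfolding adjMQ MP_col by (rule hcat3_col3) simp_all
  then show ?thesis by (simp add: Tq_def, intro eq_matI, simp_all)
qed

lemma B4: "mat_adjoint e * MP = 0\<^sub>m m b"
proof -
  have "mat_adjoint e * MP = 1\<^sub>m m * (- P) + 0\<^sub>m m a * Tq + P * 1\<^sub>m b"
    unfolding adje MP_col by (rule hcat3_col3) simp_all
  then show ?thesis by (simp, intro eq_matI, simp_all)
qed

lemma B5: "mat_adjoint MP * MP = D"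
proof -
  have "mat_adjoint MP * MP = (- mat_adjoint P) * (- P) + mat_adjoint Tq * Tq + 1\<^sub>m b * 1\<^sub>m b"
    unfolding adjMP unfolding MP_col by (rule hcat3_col3) simp_all
  then show ?thesis by (simp add: D_def, intro eq_matI, simp_all)
qed


lemma Ap_col: "Ap = col3 (hcat3 S (- (S * mat_adjoint R)) (0\<^sub>m m b)) (hcat3 (0\<^sub>m a m) (0\<^sub>m a a) (0\<^sub>m a b))
   (hcat3 (- mat_adjoint P) (mat_adjoint Tq) (1\<^sub>m b))"
  by (simp add: Ap_def A_PQRS_def block3_col3 Tq_def)
lemma Bp_col: "Bp = col3 (hcat3 (1\<^sub>m m) (0\<^sub>m m a) P) (hcat3 R (1\<^sub>m a) Q) (hcat3 (0\<^sub>m b m) (0\<^sub>m b a) (0\<^sub>m b b))"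
  by (simp add: Bp_def B_PQRS_def block3_col3)

lemma hcat3_zero: "hcat3 (0\<^sub>m r c1) (0\<^sub>m r c2) (0\<^sub>m r c3) = 0\<^sub>m r (c1 + c2 + c3)"
  by (rule eq_matI, auto simp: hcat3_def hcat_index)

lemma B7: "Ap * MQ = 0\<^sub>m (m + a + b) a"
proof -
  have "Ap * MQ = col3 (hcat3 S (- (S * mat_adjoint R)) (0\<^sub>m m b) * MQ) (hcat3 (0\<^sub>m a m) (0\<^sub>m a a) (0\<^sub>m a b) * MQ)
   (hcat3 (- mat_adjoint P) (mat_adjoint Tq) (1\<^sub>m b) * MQ)"
    unfolding Ap_col by (rule col3_mult) simp_all
  also have "hcat3 S (- (S * mat_adjoint R)) (0\<^sub>m m b) * MQ = S * mat_adjoint R + (- (S * mat_adjoint R)) * 1\<^sub>m a + 0\<^sub>m m b * mat_adjoint Q"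
    unfolding MQ_col by (rule hcat3_col3) simp_all
  also have "\<dots> = 0\<^sub>m m a" by (rule eq_matI, simp_all)
  also have "hcat3 (0\<^sub>m a m) (0\<^sub>m a a) (0\<^sub>m a b) * MQ = 0\<^sub>m a a"
    by (simp add: hcat3_zero)
  also have "hcat3 (- mat_adjoint P) (mat_adjoint Tq) (1\<^sub>m b) * MQ = (- mat_adjoint P) * mat_adjoint R + mat_adjoint Tq * 1\<^sub>m a + 1\<^sub>m b * mat_adjoint Q"
    unfolding MQ_col by (rule hcat3_col3) simp_all
  also have "\<dots> = 0\<^sub>m b a" by (simp add: adjTq; (rule eq_matI; simp)?)
  finally show ?thesis by (simp add: col3_zero)
qed

lemma B8: "Ap * e = col3 S (0\<^sub>m a m) (0\<^sub>m b m)"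
proof -
  have "Ap * e = col3 (hcat3 S (- (S * mat_adjoint R)) (0\<^sub>m m b) * e) (hcat3 (0\<^sub>m a m) (0\<^sub>m a a) (0\<^sub>m a b) * e)
   (hcat3 (- mat_adjoint P) (mat_adjoint Tq) (1\<^sub>m b) * e)"
    unfolding Ap_col by (rule col3_mult) simp_all
  also have "hcat3 S (- (S * mat_adjoint R)) (0\<^sub>m m b) * e = S * 1\<^sub>m m + (- (S * mat_adjoint R)) * 0\<^sub>m a m + 0\<^sub>m m b * mat_adjoint P"
    unfolding e_def by (rule hcat3_col3) simp_all
  also have "\<dots> = S" by (rule eq_matI, simp_all)
  also have "hcat3 (0\<^sub>m a m) (0\<^sub>m a a) (0\<^sub>m a b) * e = 0\<^sub>m a m"
    by (simp add: hcat3_zero)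
  also have "hcat3 (- mat_adjoint P) (mat_adjoint Tq) (1\<^sub>m b) * e = (- mat_adjoint P) * 1\<^sub>m m + mat_adjoint Tq * 0\<^sub>m a m + 1\<^sub>m b * mat_adjoint P"
    unfolding e_def by (rule hcat3_col3) simp_all
  also have "\<dots> = 0\<^sub>m b m" by (rule eq_matI, simp_all)
  finally show ?thesis .
qed

lemma B9: "Ap * MP = col3 (- (S * Zp)) (0\<^sub>m a b) D"
proof -
  have "Ap * MP = col3 (hcat3 S (- (S * mat_adjoint R)) (0\<^sub>m m b) * MP) (hcat3 (0\<^sub>m a m) (0\<^sub>m a a) (0\<^sub>m a b) * MP)
   (hcat3 (- mat_adjoint P) (mat_adjoint Tq) (1\<^sub>m b) * MP)"
    unfolding Ap_col by (rule col3_mult) simp_all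
  also have "hcat3 S (- (S * mat_adjoint R)) (0\<^sub>m m b) * MP = S * (- P) + (- (S * mat_adjoint R)) * Tq + 0\<^sub>m m b * 1\<^sub>m b"
    unfolding MP_col by (rule hcat3_col3) simp_all
  also have "\<dots> = - (S * Zp)"
    by (simp add: Zp_def mdistl massoc; (rule eq_matI; simp)?)
  also have "hcat3 (0\<^sub>m a m) (0\<^sub>m a a) (0\<^sub>m a b) * MP = 0\<^sub>m a b"
    by (simp add: hcat3_zero)
  also have "hcat3 (- mat_adjoint P) (mat_adjoint Tq) (1\<^sub>m b) * MP = (- mat_adjoint P) * (- P) + mat_adjoint Tq * Tq + 1\<^sub>m b * 1\<^sub>m b"
    unfolding MP_col by (rule hcat3_col3) simp_all
  also have "\<dots> = D" by (simp add: D_def; (rule eq_matI; simp)?)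
  finally show ?thesis .
qed

lemma B10: "Bp * MQ = col3 (mat_adjoint V) Wi (0\<^sub>m b a)"
proof -
  have "Bp * MQ = col3 (hcat3 (1\<^sub>m m) (0\<^sub>m m a) P * MQ) (hcat3 R (1\<^sub>m a) Q * MQ) (hcat3 (0\<^sub>m b m) (0\<^sub>m b a) (0\<^sub>m b b) * MQ)"
    unfolding Bp_col by (rule col3_mult) simp_all
  also have "hcat3 (1\<^sub>m m) (0\<^sub>m m a) P * MQ = mat_adjoint e * MQ" by (simp only: adje)
  also have "\<dots> = mat_adjoint V" by (simp add: B2)
  also have "hcat3 R (1\<^sub>m a) Q * MQ = Wi" using B1 by (simp add: adjMQ)
  also have "hcat3 (0\<^sub>m b m) (0\<^sub>m b a) (0\<^sub>m b b) * MQ = 0\<^sub>m b a" by (simp add: hcat3_zero)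
  finally show ?thesis .
qed

lemma B11: "Bp * MP = 0\<^sub>m (m + a + b) b"
proof -
  have "Bp * MP = col3 (hcat3 (1\<^sub>m m) (0\<^sub>m m a) P * MP) (hcat3 R (1\<^sub>m a) Q * MP) (hcat3 (0\<^sub>m b m) (0\<^sub>m b a) (0\<^sub>m b b) * MP)"
    unfolding Bp_col by (rule col3_mult) simp_all
  also have "hcat3 (1\<^sub>m m) (0\<^sub>m m a) P * MP = 0\<^sub>m m b" using B4 by (simp add: adje)
  also have "hcat3 R (1\<^sub>m a) Q * MP = 0\<^sub>m a b" using B3 by (simp add: adjMQ)
  also have "hcat3 (0\<^sub>m b m) (0\<^sub>m b a) (0\<^sub>m b b) * MP = 0\<^sub>m b b" by (simp add: hcat3_zero)
  finally show ?thesis by (simp add: col3_zero)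
qed

lemma add_zero_r[simp]: "dim_row A = r \<Longrightarrow> dim_col A = c \<Longrightarrow> (A::complex mat) + 0\<^sub>m r c = A"
  by (rule eq_matI, auto)
lemma add_zero_l[simp]: "dim_row A = r \<Longrightarrow> dim_col A = c \<Longrightarrow> 0\<^sub>m r c + (A::complex mat) = A"
  by (rule eq_matI, auto)

lemma col3_decomp: fixes A1 A2 A3 :: "complex mat" assumes "dim_row A1 = m" "dim_row A2 = a" "dim_row A3 = b" "dim_col A1 = q" "dim_col A2 = q" "dim_col A3 = q"
  shows "col3 A1 A2 A3 = e1 * A1 + e2 * A2 + e3 * A3"
proof -
  have "e1 * A1 = col3 (1\<^sub>m m * A1) (0\<^sub>m a m * A1) (0\<^sub>m b m * A1)" unfolding e1_def by (rule col3_mult) simp_all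
  moreover have "e2 * A2 = col3 (0\<^sub>m m a * A2) (1\<^sub>m a * A2) (0\<^sub>m b a * A2)" unfolding e2_def by (rule col3_mult) simp_all
  moreover have "e3 * A3 = col3 (0\<^sub>m m b * A3) (0\<^sub>m a b * A3) (1\<^sub>m b * A3)" unfolding e3_def by (rule col3_mult) simp_all
  ultimately show ?thesis using assms by (simp add: col3_add)
qed

lemma B12: "Bp = e1 * mat_adjoint e + e2 * mat_adjoint MQ"
proof -
  have "Bp = col3 (mat_adjoint e) (mat_adjoint MQ) (0\<^sub>m b (m + a + b))"
    by (simp add: Bp_col adje adjMQ hcat3_zero)
  also have "\<dots> = e1 * mat_adjoint e + e2 * mat_adjoint MQ + e3 * 0\<^sub>m b (m + a + b)"
    by (rule col3_decomp, simp_all)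
  also have "\<dots> = e1 * mat_adjoint e + e2 * mat_adjoint MQ"
    by (simp; (rule eq_matI; simp)?)
  finally show ?thesis .
qed

lemma B14: "mat_adjoint e1 * e = 1\<^sub>m m" "mat_adjoint e1 * MQ = mat_adjoint R"
  "mat_adjoint e2 * e = 0\<^sub>m a m" "mat_adjoint e2 * MQ = 1\<^sub>m a"
proof -
  have h1: "mat_adjoint e1 * e = 1\<^sub>m m * 1\<^sub>m m + 0\<^sub>m m a * 0\<^sub>m a m + 0\<^sub>m m b * mat_adjoint P"
    unfolding adje1 unfolding e_def by (rule hcat3_col3) simp_all
  show "mat_adjoint e1 * e = 1\<^sub>m m" by (subst h1) (rule eq_matI; simp)
  have h2: "mat_adjoint e1 * MQ = 1\<^sub>m m * mat_adjoint R + 0\<^sub>m m a * 1\<^sub>m a + 0\<^sub>m m b * mat_adjoint Q"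
    unfolding adje1 unfolding MQ_col by (rule hcat3_col3) simp_all
  show "mat_adjoint e1 * MQ = mat_adjoint R" by (subst h2) (rule eq_matI; simp)
  have h3: "mat_adjoint e2 * e = 0\<^sub>m a m * 1\<^sub>m m + 1\<^sub>m a * 0\<^sub>m a m + 0\<^sub>m a b * mat_adjoint P"
    unfolding adje2 unfolding e_def by (rule hcat3_col3) simp_all
  show "mat_adjoint e2 * e = 0\<^sub>m a m" by (subst h3) (rule eq_matI; simp)
  have h4: "mat_adjoint e2 * MQ = 0\<^sub>m a m * mat_adjoint R + 1\<^sub>m a * 1\<^sub>m a + 0\<^sub>m a b * mat_adjoint Q"
    unfolding adje2 unfolding MQ_col by (rule hcat3_col3) simp_all
  show "mat_adjoint e2 * MQ = 1\<^sub>m a" by (subst h4) (rule eq_matI; simp)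
qed

lemma B15: "e1 * mat_adjoint e1 + e2 * mat_adjoint e2 + e3 * mat_adjoint e3 = 1\<^sub>m (m + a + b)"
proof -
  have "e1 * mat_adjoint e1 + e2 * mat_adjoint e2 + e3 * mat_adjoint e3 = col3 (mat_adjoint e1) (mat_adjoint e2) (mat_adjoint e3)"
    using col3_decomp[of "mat_adjoint e1" "mat_adjoint e2" "mat_adjoint e3" "m+a+b"] 
    by simp
  also have "\<dots> = col3 (hcat3 (1\<^sub>m m) (0\<^sub>m m a) (0\<^sub>m m b)) (hcat3 (0\<^sub>m a m) (1\<^sub>m a) (0\<^sub>m a b)) (hcat3 (0\<^sub>m b m) (0\<^sub>m b a) (1\<^sub>m b))"
    by (simp only: adje1 adje2 adje3)
  also have "\<dots> = 1\<^sub>m (m + a + b)"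
    by (rule eq_matI, auto simp: col3_def hcat3_def vcat_index hcat_index)
  finally show ?thesis .
qed

lemma decomp_e: "e = e1 + e3 * mat_adjoint P"
proof -
  have h: "e = e1 * 1\<^sub>m m + e2 * 0\<^sub>m a m + e3 * mat_adjoint P"
    unfolding e_def by (rule col3_decomp, simp_all)
  show ?thesis by (subst h) (rule eq_matI; simp)
qed
lemma decomp_MQ: "MQ = e1 * mat_adjoint R + e2 + e3 * mat_adjoint Q"
proof -
  have "MQ = e1 * mat_adjoint R + e2 * 1\<^sub>m a + e3 * mat_adjoint Q"
    unfolding MQ_col by (rule col3_decomp, simp_all)
  then show ?thesis by simp
qed
lemma decomp_MP: "MP = e1 * (- P) + e2 * Tq + e3"
proof -
  have "MP = e1 * (- P) + e2 * Tq + e3 * 1\<^sub>m b"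
    unfolding MP_col by (rule col3_decomp, simp_all)
  then show ?thesis by simp
qed

end


lemma minv_eq: assumes A: "(A::complex mat) \<in> carrier_mat n n" and B: "B \<in> carrier_mat n n" and AB: "A * B = 1\<^sub>m n"
  shows "minv A = B"
proof -
  have BA: "B * A = 1\<^sub>m n" by (rule mat_mult_left_right_inverse[OF A B AB])
  have dA: "dim_row A = n" using A by auto
  let ?P = "\<lambda>B'. B' \<in> carrier_mat (dim_row A) (dim_row A) \<and> A * B' = 1\<^sub>m (dim_row A) \<and> B' * A = 1\<^sub>m (dim_row A)"
  have "?P B" using B AB BA dA by auto
  then have PB0: "?P (minv A)" unfolding minv_def by (rule someI)
  then have B0: "minv A \<in> carrier_mat n n" "minv A * A = 1\<^sub>m n" using dA by auto
  have "minv A = minv A * (A * B)" using AB B0 by simp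
  also have "\<dots> = (minv A * A) * B" by (rule assoc_mult_mat[symmetric, OF B0(1) A B])
  also have "\<dots> = B" unfolding B0(2) using B by simp
  finally show ?thesis .
qed

lemma minv_props: assumes A: "(A::complex mat) \<in> carrier_mat n n" and B: "B \<in> carrier_mat n n" and AB: "A * B = 1\<^sub>m n"
  shows "minv A \<in> carrier_mat n n" "A * minv A = 1\<^sub>m n" "minv A * A = 1\<^sub>m n"
  using minv_eq[OF A B AB] mat_mult_left_right_inverse[OF A B AB] B AB by auto

lemma kerfree_inv: assumes A: "(A::complex mat) \<in> carrier_mat n n"
  and ker: "\<And>v. v \<in> carrier_mat n 1 \<Longrightarrow> A * v = 0\<^sub>m n 1 \<Longrightarrow> v = 0\<^sub>m n 1"
  shows "\<exists>B. B \<in> carrier_mat n n \<and> A * B = 1\<^sub>m n"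
proof -
  have "det A \<noteq> 0"
  proof
    assume "det A = 0"
    then obtain v where v: "v \<in> carrier_vec n" "v \<noteq> 0\<^sub>v n" "A *\<^sub>v v = 0\<^sub>v n"
      using det_0_iff_vec_prod_zero_field[OF A] by auto
    define Vm where "Vm = mat n 1 (\<lambda>(i,j). v $ i)"
    have Vc: "Vm \<in> carrier_mat n 1" by (simp add: Vm_def)
    have cV: "col Vm 0 = v" using v(1) by (intro eq_vecI, auto simp: Vm_def)
    have "A * Vm = 0\<^sub>m n 1"
    proof (rule eq_matI)
      fix i j assume i: "i < dim_row (0\<^sub>m n 1 :: complex mat)" and j: "j < dim_col (0\<^sub>m n 1 :: complex mat)"
      then have j0: "j = 0" by simp
      have "(A * Vm) $$ (i,j) = row A i \<bullet> col Vm 0" using i j0 A by (simp add: Vm_def)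
      also have "\<dots> = (A *\<^sub>v v) $ i" using cV i A by simp
      also have "\<dots> = 0" using v(3) i by simp
      finally show "(A * Vm) $$ (i,j) = 0\<^sub>m n 1 $$ (i,j)" using i j by simp
    qed (use A in \<open>simp_all add: Vm_def\<close>)
    then have V0: "Vm = 0\<^sub>m n 1" using ker Vc by blast
    have "v = 0\<^sub>v n"
    proof (rule eq_vecI)
      fix i assume i: "i < dim_vec (0\<^sub>v n :: complex vec)"
      then have "v $ i = Vm $$ (i,0)" by (simp add: Vm_def)
      also have "\<dots> = 0" using V0 i by simp
      finally show "v $ i = 0\<^sub>v n $ i" using i by simp
    qed (use v(1) in simp)
    then show False using v(2) by simp
  qed
  from det_non_zero_imp_unit[OF A this, of undefined]
  show ?thesis unfolding Units_def by (auto simp: ring_mat_simps)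
qed

lemma kerfree_minv: assumes A: "(A::complex mat) \<in> carrier_mat n n"
  and ker: "\<And>v. v \<in> carrier_mat n 1 \<Longrightarrow> A * v = 0\<^sub>m n 1 \<Longrightarrow> v = 0\<^sub>m n 1"
  shows "minv A \<in> carrier_mat n n" "A * minv A = 1\<^sub>m n" "minv A * A = 1\<^sub>m n"
  using kerfree_inv[OF A ker] minv_props[OF A] by blast+

lemma cz: "cnj z * z = complex_of_real ((cmod z)^2)" by (metis complex_norm_square mult.commute)

lemma gram00: assumes "(Z::complex mat) \<in> carrier_mat p 1"
  shows "Re ((mat_adjoint Z * Z) $$ (0,0)) = (\<Sum>i<p. (cmod (Z $$ (i,0)))^2)"
    "Im ((mat_adjoint Z * Z) $$ (0,0)) = 0"
proof -
  have "(mat_adjoint Z * Z) $$ (0,0) = (\<Sum>i<p. cnj (Z $$ (i,0)) * Z $$ (i,0))"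
    using assms by (subst mult_entry, auto)
  also have "\<dots> = (\<Sum>i<p. complex_of_real ((cmod (Z $$ (i,0)))^2))"
    by (rule sum.cong, simp, rule cz)
  finally have eq: "(mat_adjoint Z * Z) $$ (0,0) = (\<Sum>i<p. complex_of_real ((cmod (Z $$ (i,0)))^2))" .
  show "Re ((mat_adjoint Z * Z) $$ (0,0)) = (\<Sum>i<p. (cmod (Z $$ (i,0)))^2)" unfolding eq by (simp add: Re_sum)
  show "Im ((mat_adjoint Z * Z) $$ (0,0)) = 0" unfolding eq by (simp add: Im_sum)
qed

lemma gram_nonneg: assumes "(Z::complex mat) \<in> carrier_mat p 1" shows "Re ((mat_adjoint Z * Z) $$ (0,0)) \<ge> 0"
proof -
  have "Re ((mat_adjoint Z * Z) $$ (0,0)) = (\<Sum>i<p. (cmod (Z $$ (i,0)))^2)" by (rule gram00(1)[OF assms])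
  also have "\<dots> \<ge> 0" by (rule sum_nonneg, simp)
  finally show ?thesis .
qed

lemma gram_zero: assumes Z: "(Z::complex mat) \<in> carrier_mat p 1" and z: "Re ((mat_adjoint Z * Z) $$ (0,0)) = 0"
  shows "Z = 0\<^sub>m p 1"
proof (rule eq_matI)
  fix i j assume i: "i < dim_row (0\<^sub>m p 1 :: complex mat)" and j: "j < dim_col (0\<^sub>m p 1 :: complex mat)"
  have "(\<Sum>i<p. (cmod (Z $$ (i,0)))^2) = 0" using z gram00[OF Z] by simp
  then have "\<forall>k\<in>{..<p}. (cmod (Z $$ (k,0)))^2 = 0" by (subst sum_nonneg_eq_0_iff[symmetric], auto)
  then show "Z $$ (i,j) = 0\<^sub>m p 1 $$ (i,j)" using i j by auto
qed (use Z in auto)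


lemma ker_1pp: fixes Y1 Y2 v :: "complex mat"
  assumes Y1: "Y1 \<in> carrier_mat p1 q" and Y2: "Y2 \<in> carrier_mat p2 q" and v: "v \<in> carrier_mat q 1"
  and h: "(1\<^sub>m q + mat_adjoint Y1 * Y1 + mat_adjoint Y2 * Y2) * v = 0\<^sub>m q 1"
  shows "v = 0\<^sub>m q 1"
proof -
  have dims: "dim_row Y1 = p1" "dim_col Y1 = q" "dim_row Y2 = p2" "dim_col Y2 = q" "dim_row v = q" "dim_col v = 1"
    using Y1 Y2 v by auto
  have s1: "(1\<^sub>m q + mat_adjoint Y1 * Y1 + mat_adjoint Y2 * Y2) * v = v + mat_adjoint Y1 * (Y1 * v) + mat_adjoint Y2 * (Y2 * v)"
    using dims by (simp add: mdistr massoc)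
  have s2: "mat_adjoint v * (v + mat_adjoint Y1 * (Y1 * v) + mat_adjoint Y2 * (Y2 * v)) = mat_adjoint v * v + mat_adjoint v * (mat_adjoint Y1 * (Y1 * v)) + mat_adjoint v * (mat_adjoint Y2 * (Y2 * v))"
    using dims by (simp add: mdistl)
  have s3: "mat_adjoint (Y1 * v) * (Y1 * v) = mat_adjoint v * (mat_adjoint Y1 * (Y1 * v))"
    using dims by (simp add: adj_mult massoc)
  have s4: "mat_adjoint (Y2 * v) * (Y2 * v) = mat_adjoint v * (mat_adjoint Y2 * (Y2 * v))"
    using dims by (simp add: adj_mult massoc)
  have "mat_adjoint v * ((1\<^sub>m q + mat_adjoint Y1 * Y1 + mat_adjoint Y2 * Y2) * v)
     = mat_adjoint v * v + mat_adjoint (Y1 * v) * (Y1 * v) + mat_adjoint (Y2 * v) * (Y2 * v)"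
    unfolding s1 s2 s3 s4 ..
  then have E: "mat_adjoint v * v + mat_adjoint (Y1 * v) * (Y1 * v) + mat_adjoint (Y2 * v) * (Y2 * v) = 0\<^sub>m 1 1"
    using h dims by simp
  have "(mat_adjoint v * v) $$ (0,0) + (mat_adjoint (Y1 * v) * (Y1 * v)) $$ (0,0) + (mat_adjoint (Y2 * v) * (Y2 * v)) $$ (0,0) = 0"
    using arg_cong[OF E, of "\<lambda>M. M $$ (0,0)"] dims by (simp del: index_mult_mat(1))
  then have "Re ((mat_adjoint v * v) $$ (0,0)) + Re ((mat_adjoint (Y1 * v) * (Y1 * v)) $$ (0,0)) + Re ((mat_adjoint (Y2 * v) * (Y2 * v)) $$ (0,0)) = 0"
    by (metis plus_complex.sel(1) zero_complex.sel(1))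
  moreover have "Re ((mat_adjoint v * v) $$ (0,0)) \<ge> 0" by (rule gram_nonneg[OF v])
  moreover have "Re ((mat_adjoint (Y1 * v) * (Y1 * v)) $$ (0,0)) \<ge> 0" by (rule gram_nonneg, insert dims, auto)
  moreover have "Re ((mat_adjoint (Y2 * v) * (Y2 * v)) $$ (0,0)) \<ge> 0" by (rule gram_nonneg, insert dims, auto)
  ultimately have "Re ((mat_adjoint v * v) $$ (0,0)) = 0" by linarith
  then show ?thesis by (rule gram_zero[OF v])
qed

lemma ker_shift: fixes X S v :: "complex mat"
  assumes X: "X \<in> carrier_mat p q" and S: "S \<in> carrier_mat q q" and Sh: "mat_adjoint S = S"
  and t: "Re t = 0"
  and inj: "\<And>w. w \<in> carrier_mat q 1 \<Longrightarrow> X * w = 0\<^sub>m p 1 \<Longrightarrow> w = 0\<^sub>m q 1"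
  and v: "v \<in> carrier_mat q 1"
  and h: "(mat_adjoint X * X - t \<cdot>\<^sub>m S) * v = 0\<^sub>m q 1"
  shows "v = 0\<^sub>m q 1"
proof -
  have dims: "dim_row X = p" "dim_col X = q" "dim_row S = q" "dim_col S = q" "dim_row v = q" "dim_col v = 1"
    using X S v by auto
  have s1: "(mat_adjoint X * X - t \<cdot>\<^sub>m S) * v = mat_adjoint X * (X * v) - t \<cdot>\<^sub>m (S * v)"
    using dims by (simp add: mdistr_minus massoc msmultl)
  have s2: "mat_adjoint v * (mat_adjoint X * (X * v) - t \<cdot>\<^sub>m (S * v)) = mat_adjoint v * (mat_adjoint X * (X * v)) - t \<cdot>\<^sub>m (mat_adjoint v * (S * v))"
    using dims by (simp add: mdistl_minus msmultr)
  have s3: "mat_adjoint (X * v) * (X * v) = mat_adjoint v * (mat_adjoint X * (X * v))"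
    using dims by (simp add: adj_mult massoc)
  have "mat_adjoint v * ((mat_adjoint X * X - t \<cdot>\<^sub>m S) * v)
     = mat_adjoint (X * v) * (X * v) - t \<cdot>\<^sub>m (mat_adjoint v * (S * v))"
    unfolding s1 s2 s3 ..
  then have E: "mat_adjoint (X * v) * (X * v) - t \<cdot>\<^sub>m (mat_adjoint v * (S * v)) = 0\<^sub>m 1 1"
    using h dims by simp
  define qq where "qq = (mat_adjoint v * (S * v)) $$ (0,0)"
  have h1: "(mat_adjoint (X * v) * (X * v)) $$ (0,0) - t * qq = 0"
    using arg_cong[OF E, of "\<lambda>M. M $$ (0,0)"] dims unfolding qq_def by (simp del: index_mult_mat(1))
  have Iq: "Im qq = 0"
  proof -
    have a1: "mat_adjoint (S * v) = mat_adjoint v * S" using dims Sh by (simp add: adj_mult)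
    have "mat_adjoint (mat_adjoint v * (S * v)) = mat_adjoint (S * v) * v"
      using dims by (simp add: adj_mult)
    also have "\<dots> = mat_adjoint v * (S * v)" unfolding a1 using dims by (simp add: massoc)
    finally have a2: "mat_adjoint (mat_adjoint v * (S * v)) = mat_adjoint v * (S * v)" .
    have "cnj qq = mat_adjoint (mat_adjoint v * (S * v)) $$ (0,0)" unfolding qq_def
      by (rule adj_index[symmetric], insert dims, simp_all)
    also have "\<dots> = qq" unfolding a2 qq_def ..
    finally have "cnj qq = qq" .
    from arg_cong[OF this, of Im] show ?thesis by simp
  qed
  have h2: "(mat_adjoint (X * v) * (X * v)) $$ (0,0) = t * qq" using h1 by (simp only: right_minus_eq)
  have h3: "Re (t * qq) = 0" using t Iq by simp
  have G0: "Re ((mat_adjoint (X * v) * (X * v)) $$ (0,0)) = 0" unfolding h2 by (rule h3)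
  have Xvc: "X * v \<in> carrier_mat p 1" using dims by (intro carrier_matI) simp_all
  have "X * v = 0\<^sub>m p 1" using gram_zero[OF Xvc G0] .
  then show ?thesis by (rule inj[OF v])
qed


lemma minv_herm: assumes A: "(A::complex mat) \<in> carrier_mat n n" and Ah: "mat_adjoint A = A"
  and Bc: "minv A \<in> carrier_mat n n" and AB: "A * minv A = 1\<^sub>m n" and BA: "minv A * A = 1\<^sub>m n"
  shows "mat_adjoint (minv A) = minv A"
proof -
  have "A * mat_adjoint (minv A) = mat_adjoint (minv A * A)"
    using A Bc Ah by (simp add: adj_mult)
  also have "\<dots> = 1\<^sub>m n" using BA by simp
  finally have "A * mat_adjoint (minv A) = 1\<^sub>m n" .
  moreover have c: "mat_adjoint (minv A) \<in> carrier_mat n n" using Bc by (intro carrier_matI) auto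
  ultimately have "minv A = mat_adjoint (minv A)"
    using minv_eq[OF A] by blast
  then show ?thesis by simp
qed

lemma minus_zero_r[simp]: "dim_row A = r \<Longrightarrow> dim_col A = c \<Longrightarrow> (A::complex mat) - 0\<^sub>m r c = A"
  by (rule eq_matI, auto)
lemma minus_zero_l[simp]: "dim_row A = r \<Longrightarrow> dim_col A = c \<Longrightarrow> 0\<^sub>m r c - (A::complex mat) = - A"
  by (rule eq_matI, auto)
lemma minus_self[simp]: "(A::complex mat) - A = 0\<^sub>m (dim_row A) (dim_col A)"
  by (rule eq_matI, auto)

lemma minus_plus_cancel[simp]: "dim_row A = dim_row B \<Longrightarrow> dim_col A = dim_col B \<Longrightarrow> (A::complex mat) - B + B = A"
  by (rule eq_matI, auto)
lemma plus_minus_cancel[simp]: "dim_row A = dim_row B \<Longrightarrow> dim_col A = dim_col B \<Longrightarrow> (A::complex mat) + B - B = A"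
  by (rule eq_matI, auto)

lemma uminus_eq_zero: assumes "- (A::complex mat) = 0\<^sub>m r c" shows "A = 0\<^sub>m r c"
proof -
  have "A = - (- A)" by simp
  also have "\<dots> = - 0\<^sub>m r c" using assms by simp
  also have "\<dots> = 0\<^sub>m r c" by (rule eq_matI) auto
  finally show ?thesis .
qed

context pq begin

definition "W = minv Wi"
definition "Dinv = minv D"
definition "X = X_mat m a b P Q R"
definition "F = mat_adjoint X * X"

lemma Wi_alt: "Wi = 1\<^sub>m a + mat_adjoint (mat_adjoint R) * mat_adjoint R + mat_adjoint (mat_adjoint Q) * mat_adjoint Q"
  by (simp add: Wi_def)
lemma Wic: "Wi \<in> carrier_mat a a" by (intro carrier_matI) simp_all
lemma Dc: "D \<in> carrier_mat b b" by (intro carrier_matI) simp_all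

lemma Winv: "W \<in> carrier_mat a a" "Wi * W = 1\<^sub>m a" "W * Wi = 1\<^sub>m a"
proof -
  have ker: "v = 0\<^sub>m a 1" if v: "v \<in> carrier_mat a 1" and h: "Wi * v = 0\<^sub>m a 1" for v
  proof -
    have c1: "mat_adjoint R \<in> carrier_mat m a" by (intro carrier_matI) simp_all
    have c2: "mat_adjoint Q \<in> carrier_mat b a" by (intro carrier_matI) simp_all
    have "(1\<^sub>m a + mat_adjoint (mat_adjoint R) * mat_adjoint R + mat_adjoint (mat_adjoint Q) * mat_adjoint Q) * v = 0\<^sub>m a 1"
      using h by (simp add: Wi_def)
    from ker_1pp[OF c1 c2 v this] show ?thesis .
  qed
  show "W \<in> carrier_mat a a" "Wi * W = 1\<^sub>m a" "W * Wi = 1\<^sub>m a"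
    unfolding W_def using kerfree_minv[OF Wic ker] by auto
qed

lemma Dinv: "Dinv \<in> carrier_mat b b" "D * Dinv = 1\<^sub>m b" "Dinv * D = 1\<^sub>m b"
proof -
  have ker: "v = 0\<^sub>m b 1" if v: "v \<in> carrier_mat b 1" and h: "D * v = 0\<^sub>m b 1" for v
  proof -
    have c1: "P \<in> carrier_mat m b" by (intro carrier_matI) simp_all
    have c2: "Tq \<in> carrier_mat a b" by (intro carrier_matI) simp_all
    from ker_1pp[OF c1 c2 v] h show ?thesis by (simp add: D_def)
  qed
  show "Dinv \<in> carrier_mat b b" "D * Dinv = 1\<^sub>m b" "Dinv * D = 1\<^sub>m b"
    unfolding Dinv_def using kerfree_minv[OF Dc ker] by auto
qed

lemma dimW[simp]: "dim_row W = a" "dim_col W = a" using Winv(1) by auto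
lemma dimDinv[simp]: "dim_row Dinv = b" "dim_col Dinv = b" using Dinv(1) by auto

lemma adjW: "mat_adjoint W = W"
  unfolding W_def by (rule minv_herm[OF Wic adjWi], insert Winv, auto simp: W_def)

lemma X_eq: "X = e - MQ * W * V"
  by (simp add: X_def X_mat_def e_def MQ_def W_def Wi_def V_def)

lemma dimX[simp]: "dim_row X = m + a + b" "dim_col X = m" by (auto simp: X_eq)
lemma dimF[simp]: "dim_row F = m" "dim_col F = m" by (auto simp: F_def)

lemma adjMQe: "mat_adjoint MQ * e = V"
proof -
  have "mat_adjoint (mat_adjoint e * MQ) = mat_adjoint MQ * e" by (simp add: adj_mult)
  then show ?thesis using B2 by simp
qed

lemma O1: "mat_adjoint MQ * X = 0\<^sub>m a m"
proof -
  have "mat_adjoint MQ * X = mat_adjoint MQ * e - mat_adjoint MQ * MQ * W * V"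
    unfolding X_eq by (simp add: mdistl_minus massoc)
  also have "\<dots> = V - Wi * W * V" by (simp add: adjMQe B1)
  also have "\<dots> = 0\<^sub>m a m" by (simp add: Winv; (rule eq_matI; simp)?)
  finally show ?thesis .
qed

lemma adjX: "mat_adjoint X = mat_adjoint e - mat_adjoint V * (W * mat_adjoint MQ)"
  unfolding X_eq by (simp add: adj_mult adjW massoc)

lemma O2: "mat_adjoint X * MP = 0\<^sub>m m b"
proof -
  have "mat_adjoint X * MP = mat_adjoint e * MP - mat_adjoint V * (W * (mat_adjoint MQ * MP))"
    unfolding adjX by (simp add: mdistr_minus massoc)
  also have "\<dots> = 0\<^sub>m m b" by (simp add: B3 B4; (rule eq_matI; simp)?)
  finally show ?thesis .
qed

lemma O3: "mat_adjoint MP * X = 0\<^sub>m b m"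
proof -
  have "mat_adjoint (mat_adjoint X * MP) = mat_adjoint MP * X" by (simp add: adj_mult)
  then show ?thesis using O2 by simp
qed

lemma O4: "mat_adjoint X * MQ = 0\<^sub>m m a"
proof -
  have "mat_adjoint (mat_adjoint MQ * X) = mat_adjoint X * MQ" by (simp add: adj_mult)
  then show ?thesis using O1 by simp
qed

lemma F_eq: "F = mat_adjoint e * X"
proof -
  have "F = mat_adjoint e * X - mat_adjoint V * (W * (mat_adjoint MQ * X))"
    unfolding F_def adjX by (simp add: mdistr_minus massoc)
  also have "\<dots> = mat_adjoint e * X" by (simp add: O1)
  finally show ?thesis .
qed


lemma e1_mult: "dim_row M = m \<Longrightarrow> e1 * M = col3 M (0\<^sub>m a (dim_col M)) (0\<^sub>m b (dim_col M))"
  unfolding e1_def by (subst col3_mult, simp_all)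

lemma ApX: "Ap * X = e1 * S"
proof -
  have "Ap * X = Ap * e - Ap * MQ * W * V"
    unfolding X_eq by (simp add: mdistl_minus massoc)
  also have "\<dots> = e1 * S" by (simp add: B7 B8 e1_mult)
  finally show ?thesis .
qed

lemma BpX: "Bp * X = e1 * F"
proof -
  have "Bp * X = e1 * (mat_adjoint e * X) + e2 * (mat_adjoint MQ * X)"
    unfolding B12 by (simp add: mdistr massoc)
  also have "\<dots> = e1 * F" by (simp add: O1 F_eq)
  finally show ?thesis .
qed

lemma BpMQ: "Bp * MQ = e1 * mat_adjoint V + e2 * Wi"
proof -
  have "Bp * MQ = e1 * mat_adjoint V + e2 * Wi + e3 * 0\<^sub>m b a"
    unfolding B10 by (rule col3_decomp, simp_all)
  then show ?thesis by simp
qed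

lemma ApMP: "Ap * MP = e3 * D - e1 * (S * Zp)"
proof -
  have h: "Ap * MP = e1 * (- (S * Zp)) + e2 * 0\<^sub>m a b + e3 * D"
    unfolding B9 by (rule col3_decomp, simp_all)
  show ?thesis by (subst h) (rule eq_matI; simp)
qed

lemma adje2X: "mat_adjoint e2 * X = - (W * V)"
proof -
  have "mat_adjoint e2 * X = mat_adjoint e2 * e - mat_adjoint e2 * MQ * W * V"
    unfolding X_eq by (simp add: mdistl_minus massoc)
  also have "\<dots> = - (W * V)" by (simp add: B14)
  finally show ?thesis .
qed

lemma adje1X: "mat_adjoint e1 * X = 1\<^sub>m m - mat_adjoint R * (W * V)"
proof -
  have "mat_adjoint e1 * X = mat_adjoint e1 * e - mat_adjoint e1 * MQ * W * V"
    unfolding X_eq by (simp add: mdistl_minus massoc)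
  also have "\<dots> = 1\<^sub>m m - mat_adjoint R * (W * V)" by (simp add: B14 massoc)
  finally show ?thesis .
qed

lemma Xinj: assumes v: "v \<in> carrier_mat m 1" and h: "X * v = 0\<^sub>m (m + a + b) 1" shows "v = 0\<^sub>m m 1"
proof -
  have dv: "dim_row v = m" "dim_col v = 1" using v by auto
  have "mat_adjoint e2 * X * v = 0\<^sub>m a 1" using h dv by (simp add: massoc)
  then have "- (W * (V * v)) = 0\<^sub>m a 1" using dv by (simp add: adje2X massoc)
  then have WVv: "W * (V * v) = 0\<^sub>m a 1" by (rule uminus_eq_zero)
  have "V * v = Wi * W * (V * v)" using dv by (simp add: Winv)
  also have "\<dots> = 0\<^sub>m a 1" using dv by (simp add: massoc WVv)
  finally have Vv: "V * v = 0\<^sub>m a 1" .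
  have "v = (mat_adjoint e1 * X) * v + mat_adjoint R * (W * (V * v))"
    unfolding adje1X using dv by (simp add: mdistr_minus massoc; (rule eq_matI; simp)?)
  also have "\<dots> = 0\<^sub>m m 1" using dv h by (simp add: massoc WVv)
  finally show ?thesis .
qed

lemma Hinv: assumes t: "Re t = 0"
  shows "minv (F - t \<cdot>\<^sub>m S) \<in> carrier_mat m m" "(F - t \<cdot>\<^sub>m S) * minv (F - t \<cdot>\<^sub>m S) = 1\<^sub>m m"
    "minv (F - t \<cdot>\<^sub>m S) * (F - t \<cdot>\<^sub>m S) = 1\<^sub>m m"
proof -
  have Xc: "X \<in> carrier_mat (m + a + b) m" by (intro carrier_matI) simp_all
  have Hc: "F - t \<cdot>\<^sub>m S \<in> carrier_mat m m" by (intro carrier_matI) simp_all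
  have ker: "v = 0\<^sub>m m 1" if v: "v \<in> carrier_mat m 1" and h: "(F - t \<cdot>\<^sub>m S) * v = 0\<^sub>m m 1" for v
    using ker_shift[OF Xc Sc Sh t Xinj v] h unfolding F_def by blast
  show "minv (F - t \<cdot>\<^sub>m S) \<in> carrier_mat m m" "(F - t \<cdot>\<^sub>m S) * minv (F - t \<cdot>\<^sub>m S) = 1\<^sub>m m"
    "minv (F - t \<cdot>\<^sub>m S) * (F - t \<cdot>\<^sub>m S) = 1\<^sub>m m"
    using kerfree_minv[OF Hc ker] by auto
qed

definition "G = minv F"
lemma Ginv: "G \<in> carrier_mat m m" "F * G = 1\<^sub>m m" "G * F = 1\<^sub>m m"
proof -
  have "F - 0 \<cdot>\<^sub>m S = F" by (rule eq_matI, simp_all)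
  then show "G \<in> carrier_mat m m" "F * G = 1\<^sub>m m" "G * F = 1\<^sub>m m"
    using Hinv[of 0] unfolding G_def by auto
qed
lemma dimG[simp]: "dim_row G = m" "dim_col G = m" using Ginv(1) by auto

end


lemma smult_smult_mat: "c \<cdot>\<^sub>m (d \<cdot>\<^sub>m (A::complex mat)) = (c * d) \<cdot>\<^sub>m A"
  by (rule eq_matI, auto)
lemma one_smult: "(1::complex) \<cdot>\<^sub>m A = A"
  by (rule eq_matI, auto)

context pq begin

definition "cc k = \<i> * complex_of_real k"
definition "tt k = 1 / cc k"
definition "H k = F - tt k \<cdot>\<^sub>m S"
definition "N k = minv (H k)"
definition "Mk k = - Ap + cc k \<cdot>\<^sub>m Bp"
definition "Pik k = MQ * W * mat_adjoint MQ + X * N k * mat_adjoint X"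
definition "Yk k = 2 \<cdot>\<^sub>m Pik k - 1\<^sub>m (m + a + b)"

lemma dimH[simp]: "dim_row (H k) = m" "dim_col (H k) = m" by (auto simp: H_def)
lemma dimMk[simp]: "dim_row (Mk k) = m + a + b" "dim_col (Mk k) = m + a + b" by (auto simp: Mk_def)

context fixes k :: real assumes k: "k \<noteq> 0" begin

lemma cc0: "cc k \<noteq> 0" using k by (simp add: cc_def)
lemma ctt: "cc k * tt k = 1" using cc0 by (simp add: tt_def)
lemma Ret: "Re (tt k) = 0" by (simp add: tt_def cc_def Re_divide)

lemma Ninv: "N k \<in> carrier_mat m m" "H k * N k = 1\<^sub>m m" "N k * H k = 1\<^sub>m m"
  using Hinv[OF Ret] unfolding N_def H_def by auto
lemma dimN[simp]: "dim_row (N k) = m" "dim_col (N k) = m" using Ninv(1) by auto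

lemma S1: "Mk k * MQ = cc k \<cdot>\<^sub>m (e1 * mat_adjoint V + e2 * Wi)"
proof -
  have "Mk k * MQ = - (Ap * MQ) + cc k \<cdot>\<^sub>m (Bp * MQ)"
    unfolding Mk_def by (simp add: mdistr msmultl)
  also have "\<dots> = cc k \<cdot>\<^sub>m (e1 * mat_adjoint V + e2 * Wi)"
    by (simp add: B7 BpMQ; (rule eq_matI; simp)?)
  finally show ?thesis .
qed

lemma S2: "Mk k * X = cc k \<cdot>\<^sub>m (e1 * H k)"
proof -
  have "Mk k * X = - (e1 * S) + cc k \<cdot>\<^sub>m (e1 * F)"
    unfolding Mk_def by (simp add: mdistr msmultl ApX BpX)
  also have "\<dots> = cc k \<cdot>\<^sub>m (e1 * F) - (cc k * tt k) \<cdot>\<^sub>m (e1 * S)"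
    unfolding ctt by (rule eq_matI, simp_all)
  also have "\<dots> = cc k \<cdot>\<^sub>m (e1 * H k)"
    unfolding H_def by (simp add: mdistl_minus msmultr; rule eq_matI; simp add: algebra_simps)
  finally show ?thesis .
qed


lemma WiWM: "dim_row M = a \<Longrightarrow> Wi * (W * M) = M"
proof -
  assume d: "dim_row M = a"
  have "Wi * (W * M) = (Wi * W) * M" using d by (simp add: massoc)
  also have "\<dots> = M" using d by (simp add: Winv)
  finally show ?thesis .
qed
lemma HNM: "dim_row M = m \<Longrightarrow> H k * (N k * M) = M"
proof -
  assume d: "dim_row M = m"
  have "H k * (N k * M) = (H k * N k) * M" using d by (simp add: massoc)
  also have "\<dots> = M" using d by (simp add: Ninv)
  finally show ?thesis .
qed
lemma DDM: "dim_col M = b \<Longrightarrow> M * D * Dinv = M"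
proof -
  assume d: "dim_col M = b"
  have "M * D * Dinv = M * (D * Dinv)" using d by (simp add: massoc)
  also have "\<dots> = M" using d by (simp add: Dinv)
  finally show ?thesis .
qed

lemma S3: "Mk k * Pik k = cc k \<cdot>\<^sub>m Bp"
proof -
  have "Mk k * Pik k = Mk k * MQ * (W * mat_adjoint MQ) + Mk k * X * (N k * mat_adjoint X)"
    unfolding Pik_def by (simp add: mdistl massoc)
  also have "\<dots> = cc k \<cdot>\<^sub>m ((e1 * mat_adjoint V + e2 * Wi) * (W * mat_adjoint MQ)) + cc k \<cdot>\<^sub>m (e1 * H k * (N k * mat_adjoint X))"
    by (simp add: S1 S2 msmultl)
  also have "(e1 * mat_adjoint V + e2 * Wi) * (W * mat_adjoint MQ) = e1 * (mat_adjoint V * (W * mat_adjoint MQ)) + e2 * mat_adjoint MQ"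
    by (simp add: mdistr massoc WiWM)
  also have "e1 * H k * (N k * mat_adjoint X) = e1 * mat_adjoint e - e1 * (mat_adjoint V * (W * mat_adjoint MQ))"
    by (simp add: massoc HNM adjX mdistl_minus)
  also have "cc k \<cdot>\<^sub>m (e1 * (mat_adjoint V * (W * mat_adjoint MQ)) + e2 * mat_adjoint MQ) + cc k \<cdot>\<^sub>m (e1 * mat_adjoint e - e1 * (mat_adjoint V * (W * mat_adjoint MQ)))
     = cc k \<cdot>\<^sub>m (e1 * mat_adjoint e + e2 * mat_adjoint MQ)"
    by (rule eq_matI; simp add: algebra_simps)
  also have "\<dots> = cc k \<cdot>\<^sub>m Bp" by (simp add: B12)
  finally show ?thesis .
qed

lemma S4: "Mk k * Yk k = Ap + cc k \<cdot>\<^sub>m Bp"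
proof -
  have "Mk k * Yk k = 2 \<cdot>\<^sub>m (Mk k * Pik k) - Mk k"
    unfolding Yk_def by (simp add: mdistl_minus msmultr Pik_def)
  also have "\<dots> = Ap + cc k \<cdot>\<^sub>m Bp"
    unfolding S3 unfolding Mk_def by (rule eq_matI; simp add: algebra_simps)
  finally show ?thesis .
qed

definition "Phi = tt k \<cdot>\<^sub>m (X * N k)"
definition "Psi2 = tt k \<cdot>\<^sub>m (MQ * W) - Phi * (mat_adjoint V * W)"
definition "Psi3 = (Phi * (S * Zp) - MP) * Dinv"
definition "Einv = Phi * mat_adjoint e1 + Psi2 * mat_adjoint e2 + Psi3 * mat_adjoint e3"

lemma dimPhi[simp]: "dim_row Phi = m + a + b" "dim_col Phi = m" by (auto simp: Phi_def)
lemma dimPsi2[simp]: "dim_row Psi2 = m + a + b" "dim_col Psi2 = a" by (auto simp: Psi2_def)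
lemma dimPsi3[simp]: "dim_row Psi3 = m + a + b" "dim_col Psi3 = b" by (auto simp: Psi3_def)
lemma dimEinv[simp]: "dim_row Einv = m + a + b" "dim_col Einv = m + a + b" by (auto simp: Einv_def)

lemma MPhi: "Mk k * Phi = e1"
proof -
  have "Mk k * Phi = tt k \<cdot>\<^sub>m (Mk k * X * N k)" unfolding Phi_def by (simp add: msmultr massoc)
  also have "\<dots> = (tt k * cc k) \<cdot>\<^sub>m (e1 * (H k * N k))" by (simp add: S2 msmultl massoc smult_smult_mat)
  also have "\<dots> = e1" using ctt by (simp add: Ninv mult.commute one_smult)
  finally show ?thesis .
qed

lemma MPsi2: "Mk k * Psi2 = e2"
proof -
  have "Mk k * Psi2 = tt k \<cdot>\<^sub>m (Mk k * MQ * W) - Mk k * Phi * (mat_adjoint V * W)"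
    unfolding Psi2_def by (simp add: mdistl_minus msmultr massoc)
  also have "\<dots> = (tt k * cc k) \<cdot>\<^sub>m (e1 * mat_adjoint V * W + e2 * (Wi * W)) - e1 * (mat_adjoint V * W)"
    by (simp add: S1 MPhi msmultl smult_smult_mat mdistr massoc)
  also have "\<dots> = (e1 * mat_adjoint V * W + e2) - e1 * (mat_adjoint V * W)"
    using ctt by (simp add: Winv mult.commute one_smult)
  also have "\<dots> = e2" by (simp add: massoc; rule eq_matI; simp)
  finally show ?thesis .
qed

lemma MMP: "Mk k * MP = e1 * (S * Zp) - e3 * D"
proof -
  have "Mk k * MP = - (Ap * MP) + cc k \<cdot>\<^sub>m (Bp * MP)"
    unfolding Mk_def by (simp add: mdistr msmultl)
  also have "\<dots> = e1 * (S * Zp) - e3 * D"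
    by (simp add: ApMP B11; rule eq_matI; simp)
  finally show ?thesis .
qed

lemma MPhiM: assumes "dim_row M = m" shows "Mk k * (Phi * M) = e1 * M"
proof -
  have "Mk k * (Phi * M) = Mk k * Phi * M" using assms by (simp add: massoc)
  also have "\<dots> = e1 * M" by (simp add: MPhi)
  finally show ?thesis .
qed

lemma MPsi3: "Mk k * Psi3 = e3"
proof -
  have "Mk k * Psi3 = Mk k * (Phi * (S * Zp) - MP) * Dinv"
    unfolding Psi3_def by (simp add: massoc)
  also have "Mk k * (Phi * (S * Zp) - MP) = e3 * D"
    by (simp add: mdistl_minus MPhiM MMP; rule eq_matI; simp)
  also have "e3 * D * Dinv = e3" by (rule DDM) simp
  finally show ?thesis .
qed

lemma MEinv: "Mk k * Einv = 1\<^sub>m (m + a + b)"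
proof -
  have "Mk k * Einv = Mk k * Phi * mat_adjoint e1 + Mk k * Psi2 * mat_adjoint e2 + Mk k * Psi3 * mat_adjoint e3"
    unfolding Einv_def by (simp add: mdistl massoc)
  also have "\<dots> = 1\<^sub>m (m + a + b)" by (simp add: MPhi MPsi2 MPsi3 B15)
  finally show ?thesis .
qed

lemma Mk_minv: "minv (Mk k) * Mk k = 1\<^sub>m (m + a + b)"
proof -
  have Mc: "Mk k \<in> carrier_mat (m + a + b) (m + a + b)" by (intro carrier_matI) simp_all
  have Ec: "Einv \<in> carrier_mat (m + a + b) (m + a + b)" by (intro carrier_matI) simp_all
  show ?thesis using minv_props(3)[OF Mc Ec MEinv] .
qed

lemma dimMinv[simp]: "dim_row (minv (Mk k)) = m + a + b" "dim_col (minv (Mk k)) = m + a + b"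
proof -
  have Mc: "Mk k \<in> carrier_mat (m + a + b) (m + a + b)" by (intro carrier_matI) simp_all
  have Ec: "Einv \<in> carrier_mat (m + a + b) (m + a + b)" by (intro carrier_matI) simp_all
  show "dim_row (minv (Mk k)) = m + a + b" "dim_col (minv (Mk k)) = m + a + b"
    using minv_props(1)[OF Mc Ec MEinv] by auto
qed

lemma scat_eq: "scat m a b P Q R S k = Yk k"
proof -
  have sc: "scat m a b P Q R S k = - (minv (Mk k) * (- Ap - cc k \<cdot>\<^sub>m Bp))"
    unfolding scat_def Mk_def Ap_def Bp_def cc_def by (simp add: Let_def)
  have "- Ap - cc k \<cdot>\<^sub>m Bp = - (Mk k * Yk k)"
    unfolding S4 by (rule eq_matI; simp)
  then have "scat m a b P Q R S k = minv (Mk k) * (Mk k * Yk k)"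
    unfolding sc by simp
  also have "\<dots> = (minv (Mk k) * Mk k) * Yk k"
    by (rule massoc[symmetric]) (simp_all add: Yk_def Pik_def)
  also have "\<dots> = Yk k" unfolding Mk_minv by (simp add: Yk_def Pik_def)
  finally show ?thesis .
qed
end
end


context pq begin

definition "Zs = MQ * W * mat_adjoint MQ + X * G * mat_adjoint X + MP * Dinv * mat_adjoint MP"
lemma dimZs[simp]: "dim_row Zs = m + a + b" "dim_col Zs = m + a + b" by (auto simp: Zs_def)

lemma O5: "mat_adjoint MP * MQ = 0\<^sub>m b a"
proof -
  have "mat_adjoint (mat_adjoint MQ * MP) = mat_adjoint MP * MQ" by (simp add: adj_mult)
  then show ?thesis using B3 by simp
qed

lemma ZMQ: "Zs * MQ = MQ"
proof -
  have "Zs * MQ = MQ * (W * (mat_adjoint MQ * MQ)) + X * (G * (mat_adjoint X * MQ)) + MP * (Dinv * (mat_adjoint MP * MQ))"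
    unfolding Zs_def by (simp add: mdistr massoc)
  also have "\<dots> = MQ" by (simp add: B1 O4 O5 Winv)
  finally show ?thesis .
qed

lemma ZX: "Zs * X = X"
proof -
  have "Zs * X = MQ * (W * (mat_adjoint MQ * X)) + X * (G * (mat_adjoint X * X)) + MP * (Dinv * (mat_adjoint MP * X))"
    unfolding Zs_def by (simp add: mdistr massoc)
  also have "\<dots> = X" by (simp add: O1 O3 Ginv F_def[symmetric])
  finally show ?thesis .
qed

lemma ZMP: "Zs * MP = MP"
proof -
  have "Zs * MP = MQ * (W * (mat_adjoint MQ * MP)) + X * (G * (mat_adjoint X * MP)) + MP * (Dinv * (mat_adjoint MP * MP))"
    unfolding Zs_def by (simp add: mdistr massoc)
  also have "\<dots> = MP" by (simp add: B3 O2 B5 Dinv)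
  finally show ?thesis .
qed

lemma ZMA: "Zs * M = M \<Longrightarrow> dim_row M = m + a + b \<Longrightarrow> dim_col M = dim_row A \<Longrightarrow> Zs * (M * A) = M * A"
  by (metis massoc dimZs(2))

lemma e3D: "e3 * D = MP + e * Zp - MQ * Tq"
proof -
  have "e * Zp = col3 Zp (0\<^sub>m a b) (mat_adjoint P * Zp)"
    unfolding e_def by (subst col3_mult, simp_all)
  moreover have "MQ * Tq = col3 (mat_adjoint R * Tq) Tq (mat_adjoint Q * Tq)"
    unfolding MQ_col by (subst col3_mult, simp_all)
  moreover have "e3 * D = col3 (0\<^sub>m m b) (0\<^sub>m a b) D"
    unfolding e3_def by (subst col3_mult, simp_all)
  ultimately have h: "MP + e * Zp - MQ * Tq = col3 (- P + Zp - mat_adjoint R * Tq) (Tq + 0\<^sub>m a b - Tq) (1\<^sub>m b + mat_adjoint P * Zp - mat_adjoint Q * Tq)"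
    and h2: "e3 * D = col3 (0\<^sub>m m b) (0\<^sub>m a b) D"
    unfolding MP_col by (simp_all add: col3_add col3_minus)
  have c1: "- P + Zp - mat_adjoint R * Tq = 0\<^sub>m m b" unfolding Zp_def by (rule eq_matI; simp)
  have c2: "Tq + 0\<^sub>m a b - Tq = 0\<^sub>m a b" by (rule eq_matI; simp)
  have c3: "1\<^sub>m b + mat_adjoint P * Zp - mat_adjoint Q * Tq = D"
    unfolding Zp_def D_def adjTq by (simp add: mdistl mdistr_minus massoc; rule eq_matI; simp)
  show ?thesis unfolding h h2 c1 c2 c3 ..
qed

lemma Ze: "Zs * e = e"
proof -
  have "e = X + MQ * (W * V)" unfolding X_eq by (simp add: massoc; rule eq_matI; simp)
  moreover have "Zs * (X + MQ * (W * V)) = X + MQ * (W * V)"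
    by (simp add: mdistl ZX ZMA ZMQ)
  ultimately show ?thesis by simp
qed

lemma Ze3: "Zs * e3 = e3"
proof -
  have "Zs * (e3 * D) = Zs * MP + Zs * (e * Zp) - Zs * (MQ * Tq)"
    unfolding e3D by (simp add: mdistl mdistl_minus)
  also have "\<dots> = e3 * D" unfolding e3D by (simp add: ZMP ZMA Ze ZMQ)
  finally have h: "Zs * (e3 * D) = e3 * D" .
  have "Zs * e3 = Zs * (e3 * D) * Dinv" by (simp add: massoc Dinv)
  also have "\<dots> = e3" unfolding h by (rule DDM[of 1]) simp_all
  finally show ?thesis .
qed

lemma Ze1: "Zs * e1 = e1"
proof -
  have "e1 = e - e3 * mat_adjoint P" unfolding decomp_e by (rule eq_matI; simp)
  moreover have "Zs * (e - e3 * mat_adjoint P) = e - e3 * mat_adjoint P"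
    by (simp add: mdistl_minus Ze ZMA Ze3)
  ultimately show ?thesis by simp
qed

lemma Ze2: "Zs * e2 = e2"
proof -
  have "e2 = MQ - e1 * mat_adjoint R - e3 * mat_adjoint Q" unfolding decomp_MQ by (rule eq_matI; simp)
  moreover have "Zs * (MQ - e1 * mat_adjoint R - e3 * mat_adjoint Q) = MQ - e1 * mat_adjoint R - e3 * mat_adjoint Q"
    by (simp add: mdistl_minus ZMQ ZMA Ze1 Ze3)
  ultimately show ?thesis by simp
qed

lemma Zs_one: "Zs = 1\<^sub>m (m + a + b)"
proof -
  have "Zs = Zs * (e1 * mat_adjoint e1 + e2 * mat_adjoint e2 + e3 * mat_adjoint e3)" unfolding B15 by simp
  also have "\<dots> = e1 * mat_adjoint e1 + e2 * mat_adjoint e2 + e3 * mat_adjoint e3"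
    by (simp add: mdistl ZMA Ze1 Ze2 Ze3)
  also have "\<dots> = 1\<^sub>m (m + a + b)" by (rule B15)
  finally show ?thesis .
qed

end


definition mn :: "complex mat \<Rightarrow> real" where
  "mn A = (\<Sum>i<dim_row A. \<Sum>j<dim_col A. cmod (A $$ (i,j)))"

lemma mn_nonneg: "mn A \<ge> 0" unfolding mn_def by (intro sum_nonneg) auto

lemma mn_entry: assumes "i < dim_row A" "j < dim_col A" shows "cmod (A $$ (i,j)) \<le> mn A"
proof -
  have "cmod (A $$ (i,j)) \<le> (\<Sum>j<dim_col A. cmod (A $$ (i,j)))"
    by (rule member_le_sum[of j "{..<dim_col A}" "\<lambda>j. cmod (A $$ (i,j))"], insert assms, auto)
  also have "\<dots> \<le> mn A" unfolding mn_def
    by (rule member_le_sum[of i "{..<dim_row A}" "\<lambda>i. \<Sum>j<dim_col A. cmod (A $$ (i,j))"], insert assms, auto intro: sum_nonneg)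
  finally show ?thesis .
qed

lemma mn_row: assumes "k < dim_row B" shows "(\<Sum>j<dim_col B. cmod (B $$ (k,j))) \<le> mn B"
  unfolding mn_def
  by (rule member_le_sum[of k "{..<dim_row B}" "\<lambda>i. \<Sum>j<dim_col B. cmod (B $$ (i,j))"], insert assms, auto intro: sum_nonneg)

lemma mn_mult: assumes d: "dim_col A = dim_row B" shows "mn (A * B) \<le> mn A * mn B"
proof -
  have "mn (A * B) = (\<Sum>i<dim_row A. \<Sum>j<dim_col B. cmod (\<Sum>k<dim_row B. A $$ (i,k) * B $$ (k,j)))"
    unfolding mn_def by (intro sum.cong refl; simp add: scalar_prod_def atLeast0LessThan d)
  also have "\<dots> \<le> (\<Sum>i<dim_row A. \<Sum>j<dim_col B. \<Sum>k<dim_row B. cmod (A $$ (i,k)) * cmod (B $$ (k,j)))"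
    by (intro sum_mono, rule order_trans[OF norm_sum], simp add: norm_mult)
  also have "\<dots> = (\<Sum>i<dim_row A. \<Sum>k<dim_row B. cmod (A $$ (i,k)) * (\<Sum>j<dim_col B. cmod (B $$ (k,j))))"
    by (rule sum.cong[OF refl], subst sum.swap, simp add: sum_distrib_left)
  also have "\<dots> \<le> (\<Sum>i<dim_row A. \<Sum>k<dim_row B. cmod (A $$ (i,k)) * mn B)"
    by (intro sum_mono mult_left_mono mn_row, auto)
  also have "\<dots> = mn A * mn B" unfolding mn_def using d by (simp add: sum_distrib_right)
  finally show ?thesis .
qed

lemma mn_add: assumes "dim_row A = dim_row B" "dim_col A = dim_col B" shows "mn (A + B) \<le> mn A + mn B"
proof -
  have "mn (A + B) = (\<Sum>i<dim_row A. \<Sum>j<dim_col A. cmod (A $$ (i,j) + B $$ (i,j)))"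
    unfolding mn_def using assms by (intro sum.cong refl; simp)
  also have "\<dots> \<le> (\<Sum>i<dim_row A. \<Sum>j<dim_col A. cmod (A $$ (i,j)) + cmod (B $$ (i,j)))"
    by (intro sum_mono norm_triangle_ineq)
  also have "\<dots> = mn A + mn B" unfolding mn_def using assms by (simp add: sum.distrib)
  finally show ?thesis .
qed

lemma mn_smult: "mn (c \<cdot>\<^sub>m A) = cmod c * mn A"
  unfolding mn_def by (simp add: norm_mult sum_distrib_left)

lemma mn_one: "mn (1\<^sub>m n) = real n"
proof -
  have "mn (1\<^sub>m n) = (\<Sum>i<n. \<Sum>j<n. if i = j then 1 else 0)"
    unfolding mn_def by (intro sum.cong refl; simp)
  also have "\<dots> = real n" by simp
  finally show ?thesis .
qed

lemma mn_pow: assumes "dim_row K = m" "dim_col K = m" shows "mn (K ^\<^sub>m Suc j) \<le> mn K ^ Suc j"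
proof (induction j)
  case 0
  have "K ^\<^sub>m Suc 0 = K" using assms by simp
  then show ?case by simp
next
  case (Suc j)
  have "mn (K ^\<^sub>m Suc (Suc j)) = mn (K ^\<^sub>m Suc j * K)" by simp
  also have "\<dots> \<le> mn (K ^\<^sub>m Suc j) * mn K" by (rule mn_mult, insert assms, simp)
  also have "\<dots> \<le> mn K ^ Suc j * mn K" by (rule mult_right_mono[OF Suc mn_nonneg])
  finally show ?case by (simp add: mult.commute)
qed

lemma smult_pow: fixes A :: "complex mat" assumes "dim_row A = n" "dim_col A = n" shows "c ^ j \<cdot>\<^sub>m (A ^\<^sub>m j) = (c \<cdot>\<^sub>m A) ^\<^sub>m j"
proof (induction j)
  case 0
  then show ?case by (rule eq_matI, auto)
next
  case (Suc j)
  have dA: "dim_col (A ^\<^sub>m j) = n" "dim_row (A ^\<^sub>m j) = n" using assms by auto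
  have "(c ^ j \<cdot>\<^sub>m (A ^\<^sub>m j)) * (c \<cdot>\<^sub>m A) = c ^ j \<cdot>\<^sub>m (A ^\<^sub>m j * (c \<cdot>\<^sub>m A))"
    by (rule msmultl) (simp add: dA assms)
  also have "\<dots> = c ^ j \<cdot>\<^sub>m (c \<cdot>\<^sub>m (A ^\<^sub>m j * A))"
    by (subst msmultr) (simp_all add: dA assms)
  also have "\<dots> = c ^ Suc j \<cdot>\<^sub>m (A ^\<^sub>m Suc j)"
    by (simp add: smult_smult_mat mult.commute)
  finally have "c ^ Suc j \<cdot>\<^sub>m (A ^\<^sub>m Suc j) = (c ^ j \<cdot>\<^sub>m (A ^\<^sub>m j)) * (c \<cdot>\<^sub>m A)" by simp
  then show ?case using Suc by simp
qed

lemma pow_comm: fixes K :: "complex mat" assumes "dim_row K = n" "dim_col K = n" shows "K * K ^\<^sub>m j = K ^\<^sub>m j * K"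
proof (induction j)
  case 0
  then show ?case using assms by simp
next
  case (Suc j)
  have dK: "dim_col (K ^\<^sub>m j) = n" "dim_row (K ^\<^sub>m j) = n" using assms by auto
  have "K * K ^\<^sub>m Suc j = (K * K ^\<^sub>m j) * K"
    unfolding pow_mat.simps by (rule massoc[symmetric]) (simp_all add: dK assms)
  also have "\<dots> = K ^\<^sub>m Suc j * K" using Suc by simp
  finally show ?case .
qed


context pq begin

definition "Kk k = tt k \<cdot>\<^sub>m (G * S)"
definition "NF k = N k * F"
primrec psum :: "real \<Rightarrow> nat \<Rightarrow> complex mat" where
  "psum k 0 = 0\<^sub>m m m"
| "psum k (Suc J) = psum k J + Kk k ^\<^sub>m Suc J"

lemma Ret_all: "Re (tt k) = 0" by (simp add: tt_def cc_def Re_divide)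
lemma Ninv_all: "N k \<in> carrier_mat m m" "H k * N k = 1\<^sub>m m" "N k * H k = 1\<^sub>m m"
  using Hinv[OF Ret_all] unfolding N_def H_def by auto
lemma dimN_all[simp]: "dim_row (N k) = m" "dim_col (N k) = m" using Ninv_all(1) by auto

lemma dimKk[simp]: "dim_row (Kk k) = m" "dim_col (Kk k) = m" by (auto simp: Kk_def)
lemma dimNF[simp]: "dim_row (NF k) = m" "dim_col (NF k) = m" by (auto simp: NF_def)
lemma dimpsum[simp]: "dim_row (psum k J) = m" "dim_col (psum k J) = m" by (induct J, auto)
lemma dimKpow[simp]: "dim_row (Kk k ^\<^sub>m j) = m" "dim_col (Kk k ^\<^sub>m j) = m" by auto

context fixes k :: real assumes k: "k \<noteq> 0" begin

lemma NF1: "NF k - 1\<^sub>m m = NF k * Kk k"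
proof -
  have "N k * F - tt k \<cdot>\<^sub>m (N k * S) = N k * H k"
    unfolding H_def using Ninv[OF k] by (simp add: mdistl_minus msmultr)
  also have "\<dots> = 1\<^sub>m m" using Ninv[OF k] by simp
  finally have h: "N k * F - tt k \<cdot>\<^sub>m (N k * S) = 1\<^sub>m m" .
  have "NF k * Kk k = tt k \<cdot>\<^sub>m (N k * (F * G * S))"
    unfolding NF_def Kk_def using Ninv[OF k] by (simp add: msmultr massoc)
  also have "\<dots> = tt k \<cdot>\<^sub>m (N k * S)" using Ginv by simp
  also have "\<dots> = NF k - 1\<^sub>m m" unfolding NF_def h[symmetric] by (rule eq_matI; simp)
  finally show ?thesis by simp
qed

lemma tail: "(NF k - 1\<^sub>m m) - psum k J = NF k * Kk k ^\<^sub>m Suc J"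
proof (induction J)
  case 0
  have "Kk k ^\<^sub>m Suc 0 = Kk k" by simp
  then show ?case using NF1 by simp
next
  case (Suc J)
  have "(NF k - 1\<^sub>m m) - psum k (Suc J) = ((NF k - 1\<^sub>m m) - psum k J) - Kk k ^\<^sub>m Suc J"
    by (simp; rule eq_matI; simp)
  also have "\<dots> = NF k * Kk k ^\<^sub>m Suc J - Kk k ^\<^sub>m Suc J" using Suc by simp
  also have "\<dots> = (NF k - 1\<^sub>m m) * Kk k ^\<^sub>m Suc J" by (simp add: mdistr_minus)
  also have "\<dots> = NF k * (Kk k * Kk k ^\<^sub>m Suc J)" unfolding NF1 by (simp add: massoc)
  also have "Kk k * Kk k ^\<^sub>m Suc J = Kk k ^\<^sub>m Suc (Suc J)"
    by (subst pow_comm[of _ m]) simp_all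
  finally show ?case .
qed

lemma T_eq: "X * ((1 / (\<i> * complex_of_real k)) ^ (Suc j) \<cdot>\<^sub>m ((G * S) ^\<^sub>m (Suc j))) * G * mat_adjoint X
   = X * Kk k ^\<^sub>m Suc j * G * mat_adjoint X"
proof -
  have "(1 / (\<i> * complex_of_real k)) ^ (Suc j) \<cdot>\<^sub>m ((G * S) ^\<^sub>m (Suc j)) = Kk k ^\<^sub>m Suc j"
    unfolding Kk_def tt_def cc_def by (rule smult_pow[of _ m]) simp_all
  then show ?thesis by simp
qed

lemma psum_entries: assumes i: "i < m + a + b" and l: "l < m + a + b"
  shows "(\<Sum>j<J. 2 * (X * Kk k ^\<^sub>m Suc j * G * mat_adjoint X) $$ (i,l)) = 2 * (X * psum k J * G * mat_adjoint X) $$ (i,l)"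
proof (induction J)
  case 0
  then show ?case using i l by (simp add: mzl mzr)
next
  case (Suc J)
  have "X * psum k (Suc J) * G * mat_adjoint X = X * psum k J * G * mat_adjoint X + X * Kk k ^\<^sub>m Suc J * G * mat_adjoint X"
    by (simp add: mdistl mdistr)
  then show ?case using Suc i l by (simp del: index_mult_mat(1) add: distrib_left)
qed

end
end


lemma entry_bound4: fixes A B C D :: "complex mat"
  assumes "dim_col A = dim_row B" "dim_col B = dim_row C" "dim_col C = dim_row D"
    "i < dim_row A" "l < dim_col D"
  shows "cmod ((A * B * C * D) $$ (i,l)) \<le> mn A * mn B * mn C * mn D"
proof -
  have "cmod ((A * B * C * D) $$ (i,l)) \<le> mn (A * B * C * D)" by (rule mn_entry, insert assms, auto)
  also have "\<dots> \<le> mn (A * B * C) * mn D" by (rule mn_mult, insert assms, auto)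
  also have "\<dots> \<le> (mn (A * B) * mn C) * mn D"
    by (intro mult_right_mono mn_mult mn_nonneg, insert assms, auto)
  also have "\<dots> \<le> (mn A * mn B * mn C) * mn D"
    by (intro mult_right_mono mn_mult mn_nonneg mult_nonneg_nonneg, insert assms, auto)
  finally show ?thesis by simp
qed

context pq begin

definition "Cm = - 1\<^sub>m (m + a + b) + 2 \<cdot>\<^sub>m (MQ * W * mat_adjoint MQ) + 2 \<cdot>\<^sub>m (X * G * mat_adjoint X)"
definition "Lm = 1\<^sub>m (m + a + b) - 2 \<cdot>\<^sub>m (MP * Dinv * mat_adjoint MP)"

lemma lin3: "x1 + x2 + x3 = d \<Longrightarrow> - d + 2 * x1 + 2 * x2 = d - 2 * (x3::complex)"
  by (drule sym, simp add: algebra_simps)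

lemma Cm_Lm: "Cm = Lm"
proof -
  have h: "MQ * W * mat_adjoint MQ + X * G * mat_adjoint X + MP * Dinv * mat_adjoint MP = 1\<^sub>m (m + a + b)"
    using Zs_one unfolding Zs_def .
  show ?thesis
  proof (rule eq_matI)
    fix i j assume i: "i < dim_row Lm" and j: "j < dim_col Lm"
    have ij: "i < m + a + b" "j < m + a + b" using i j by (auto simp: Lm_def)
    have s: "(MQ * W * mat_adjoint MQ) $$ (i,j) + (X * G * mat_adjoint X) $$ (i,j) + (MP * Dinv * mat_adjoint MP) $$ (i,j)
       = (1\<^sub>m (m + a + b) :: complex mat) $$ (i,j)"
      using arg_cong[OF h, of "\<lambda>M. M $$ (i,j)"] ij by (simp del: index_mult_mat(1) index_one_mat(1))
    have c: "Cm $$ (i,j) = - (1\<^sub>m (m + a + b) :: complex mat) $$ (i,j) + 2 * (MQ * W * mat_adjoint MQ) $$ (i,j) + 2 * (X * G * mat_adjoint X) $$ (i,j)"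
      unfolding Cm_def using ij by (simp del: index_mult_mat(1) index_one_mat(1))
    have l: "Lm $$ (i,j) = (1\<^sub>m (m + a + b) :: complex mat) $$ (i,j) - 2 * (MP * Dinv * mat_adjoint MP) $$ (i,j)"
      unfolding Lm_def using ij by (simp del: index_mult_mat(1) index_one_mat(1))
    show "Cm $$ (i,j) = Lm $$ (i,j)" unfolding c l by (rule lin3[OF s])
  qed (auto simp: Cm_def Lm_def)
qed

lemma dimCm[simp]: "dim_row Cm = m + a + b" "dim_col Cm = m + a + b" by (auto simp: Cm_def)

lemma N_NF: "X * N k * mat_adjoint X = X * (NF k * G) * mat_adjoint X"
proof -
  have "NF k * G = N k" unfolding NF_def using Ginv by (simp add: massoc)
  then show ?thesis by simp
qed

lemma Ydiff: "Yk k - Cm = 2 \<cdot>\<^sub>m (X * (NF k - 1\<^sub>m m) * G * mat_adjoint X)"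
proof -
  have h: "X * (NF k - 1\<^sub>m m) * G * mat_adjoint X = X * (NF k * G) * mat_adjoint X - X * G * mat_adjoint X"
    by (simp add: mdistl_minus mdistr_minus massoc)
  show ?thesis unfolding Yk_def Pik_def Cm_def N_NF h
    by (rule eq_matI; simp del: index_mult_mat(1) index_one_mat(1) add: algebra_simps)
qed

lemma mnKk: "mn (Kk k) = cmod (tt k) * mn (G * S)" unfolding Kk_def by (rule mn_smult)

lemma cmod_tt: "cmod (tt k) = 1 / \<bar>k\<bar>"
  by (simp add: tt_def cc_def norm_divide norm_mult)

lemma NF_bound: assumes k: "k \<noteq> 0" and r: "mn (Kk k) \<le> 1/2" shows "mn (NF k) \<le> 2 * m"
proof -
  have "NF k = 1\<^sub>m m + (NF k - 1\<^sub>m m)" by (rule eq_matI; simp)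
  then have "NF k = 1\<^sub>m m + NF k * Kk k" unfolding NF1[OF k] .
  then have "mn (NF k) \<le> mn (1\<^sub>m m) + mn (NF k * Kk k)" by (metis mn_add dimNF index_mult_mat(2,3) index_one_mat(2,3) dimKk)
  also have "\<dots> \<le> m + mn (NF k) * mn (Kk k)" using mn_mult[of "NF k" "Kk k"] by (simp add: mn_one)
  also have "\<dots> \<le> m + mn (NF k) * (1/2)" by (rule add_left_mono, rule mult_left_mono[OF r mn_nonneg])
  finally show ?thesis by simp
qed

end

lemma seq_conv: fixes f :: "nat \<Rightarrow> complex" and c r :: real
  assumes b: "\<And>J. norm (f J - s) \<le> c * r ^ Suc J" and r: "0 \<le> r" "r < 1"
  shows "f \<longlonglongrightarrow> s"
proof -
  have "(\<lambda>J. r ^ J) \<longlonglongrightarrow> 0" by (rule LIMSEQ_power_zero, insert r, simp)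
  then have "(\<lambda>J. r ^ Suc J) \<longlonglongrightarrow> 0" by (rule LIMSEQ_Suc)
  then have "(\<lambda>J. c * r ^ Suc J) \<longlonglongrightarrow> 0" by (rule tendsto_mult_right_zero)
  then have "(\<lambda>J. f J - s) \<longlonglongrightarrow> 0"
    by (rule Lim_null_comparison[rotated], intro always_eventually allI b)
  then show ?thesis by (rule LIM_zero_cancel)
qed

lemma fun_conv: fixes f :: "real \<Rightarrow> complex" and c x0 :: real
  assumes b: "\<And>x. x > x0 \<Longrightarrow> norm (f x - s) \<le> c / x"
  shows "(f \<longlongrightarrow> s) at_top"
proof -
  have "((\<lambda>x. c / x) \<longlongrightarrow> 0) at_top"
    by (rule tendsto_divide_0[OF tendsto_const], rule filterlim_at_top_imp_at_infinity, rule filterlim_ident)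
  then have "((\<lambda>x. f x - s) \<longlongrightarrow> 0) at_top"
    by (rule Lim_null_comparison[rotated], insert b, auto intro: eventually_at_top_dense[THEN iffD2])
  then show ?thesis by (rule LIM_zero_cancel)
qed

context pq begin

lemma part1_entry: assumes kpos: "k > 0" and r: "mn (Kk k) \<le> 1/2" and i: "i < m + a + b" and l: "l < m + a + b"
  shows "(\<lambda>j. 2 * (X * Kk k ^\<^sub>m Suc j * G * mat_adjoint X) $$ (i,l)) sums (scat m a b P Q R S k $$ (i,l) - Cm $$ (i,l))"
proof -
  have k: "k \<noteq> 0" using kpos by simp
  define s where "s = 2 * (X * (NF k - 1\<^sub>m m) * G * mat_adjoint X) $$ (i,l)"
  have sv: "scat m a b P Q R S k $$ (i,l) - Cm $$ (i,l) = s"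
  proof -
    have "scat m a b P Q R S k $$ (i,l) - Cm $$ (i,l) = (Yk k - Cm) $$ (i,l)"
      unfolding scat_eq[OF k] using i l by (simp del: index_mult_mat(1) add: Yk_def Pik_def)
    also have "\<dots> = s" unfolding Ydiff s_def using i l by (simp del: index_mult_mat(1))
    finally show ?thesis .
  qed
  define c where "c = 2 * mn X * (2 * m) * mn G * mn (mat_adjoint X)"
  have bound: "norm ((\<Sum>j<J. 2 * (X * Kk k ^\<^sub>m Suc j * G * mat_adjoint X) $$ (i,l)) - s) \<le> c * mn (Kk k) ^ Suc J" for J
  proof -
    have "(\<Sum>j<J. 2 * (X * Kk k ^\<^sub>m Suc j * G * mat_adjoint X) $$ (i,l)) - s
      = - (2 * (X * ((NF k - 1\<^sub>m m) - psum k J) * G * mat_adjoint X) $$ (i,l))"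
    proof -
      have "X * ((NF k - 1\<^sub>m m) - psum k J) * G * mat_adjoint X = X * (NF k - 1\<^sub>m m) * G * mat_adjoint X - X * psum k J * G * mat_adjoint X"
        by (simp add: mdistl_minus mdistr_minus)
      then show ?thesis unfolding psum_entries[OF k i l] s_def using i l
        by (simp del: index_mult_mat(1) add: algebra_simps)
    qed
    also have "\<dots> = - (2 * (X * (NF k * Kk k ^\<^sub>m Suc J) * G * mat_adjoint X) $$ (i,l))"
      unfolding tail[OF k] ..
    finally have eq: "(\<Sum>j<J. 2 * (X * Kk k ^\<^sub>m Suc j * G * mat_adjoint X) $$ (i,l)) - s
      = - (2 * (X * (NF k * Kk k ^\<^sub>m Suc J) * G * mat_adjoint X) $$ (i,l))" .
    have "norm (2 * (X * (NF k * Kk k ^\<^sub>m Suc J) * G * mat_adjoint X) $$ (i,l))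
       \<le> 2 * (mn X * mn (NF k * Kk k ^\<^sub>m Suc J) * mn G * mn (mat_adjoint X))"
      using entry_bound4[of X "NF k * Kk k ^\<^sub>m Suc J" G "mat_adjoint X" i l] i l by (simp add: norm_mult)
    also have "\<dots> \<le> 2 * (mn X * (2 * m * mn (Kk k) ^ Suc J) * mn G * mn (mat_adjoint X))"
    proof -
      have "mn (NF k * Kk k ^\<^sub>m Suc J) \<le> mn (NF k) * mn (Kk k ^\<^sub>m Suc J)" by (rule mn_mult) simp
      also have "\<dots> \<le> (2 * m) * mn (Kk k) ^ Suc J"
        by (rule mult_mono[OF NF_bound[OF k r] mn_pow], simp_all add: mn_nonneg)
      finally have h: "mn (NF k * Kk k ^\<^sub>m Suc J) \<le> 2 * m * mn (Kk k) ^ Suc J" .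
      show ?thesis
        by (intro mult_left_mono mult_right_mono h mn_nonneg mult_nonneg_nonneg, simp_all)
    qed
    also have "\<dots> = c * mn (Kk k) ^ Suc J" unfolding c_def by (simp add: algebra_simps)
    finally show ?thesis unfolding eq by simp
  qed
  have "(\<lambda>J. \<Sum>j<J. 2 * (X * Kk k ^\<^sub>m Suc j * G * mat_adjoint X) $$ (i,l)) \<longlonglongrightarrow> s"
    by (rule seq_conv[OF bound mn_nonneg], insert r, simp)
  then show ?thesis unfolding sums_def sv .
qed

lemma part2_entry: assumes i: "i < m + a + b" and l: "l < m + a + b"
  shows "((\<lambda>k. scat m a b P Q R S k $$ (i,l)) \<longlongrightarrow> Lm $$ (i,l)) at_top"
proof -
  define g where "g = mn (G * S)"
  define c where "c = 2 * mn X * (2 * m) * g * mn G * mn (mat_adjoint X)"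
  have "norm (scat m a b P Q R S k $$ (i,l) - Lm $$ (i,l)) \<le> c / k" if kk: "k > 2 * g + 1" for k
  proof -
    have g0: "g \<ge> 0" unfolding g_def by (rule mn_nonneg)
    have kpos: "k > 0" using kk g0 by linarith
    have k: "k \<noteq> 0" using kpos by simp
    have rk: "mn (Kk k) = g / k" unfolding mnKk cmod_tt g_def using kpos by simp
    have r: "mn (Kk k) \<le> 1/2" unfolding rk using kk g0 kpos by (simp add: field_simps)
    have "scat m a b P Q R S k $$ (i,l) - Lm $$ (i,l) = (Yk k - Cm) $$ (i,l)"
      unfolding scat_eq[OF k] Cm_Lm[symmetric] using i l by (simp del: index_mult_mat(1) add: Yk_def Pik_def)
    also have "\<dots> = 2 * (X * (NF k * Kk k) * G * mat_adjoint X) $$ (i,l)"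
      unfolding Ydiff NF1[OF k] using i l by (simp del: index_mult_mat(1))
    finally have eq: "scat m a b P Q R S k $$ (i,l) - Lm $$ (i,l) = 2 * (X * (NF k * Kk k) * G * mat_adjoint X) $$ (i,l)" .
    have "norm (2 * (X * (NF k * Kk k) * G * mat_adjoint X) $$ (i,l))
       \<le> 2 * (mn X * mn (NF k * Kk k) * mn G * mn (mat_adjoint X))"
      using entry_bound4[of X "NF k * Kk k" G "mat_adjoint X" i l] i l by (simp add: norm_mult)
    also have "\<dots> \<le> 2 * (mn X * (2 * m * (g / k)) * mn G * mn (mat_adjoint X))"
    proof -
      have "mn (NF k * Kk k) \<le> mn (NF k) * mn (Kk k)" by (rule mn_mult) simp
      also have "\<dots> \<le> (2 * m) * (g / k)"
        unfolding rk[symmetric] by (rule mult_right_mono[OF NF_bound[OF k r] mn_nonneg])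
      finally have h: "mn (NF k * Kk k) \<le> 2 * m * (g / k)" .
      show ?thesis
        by (intro mult_left_mono mult_right_mono h mn_nonneg mult_nonneg_nonneg, simp_all)
    qed
    also have "\<dots> = c / k" unfolding c_def by (simp add: algebra_simps)
    finally show ?thesis unfolding eq .
  qed
  then show ?thesis by (rule fun_conv)
qed

end

theorem mainTheorem4:
  fixes m a b :: nat and P Q R S :: "complex mat"
  defines "n \<equiv> m + a + b"
  assumes "m \<ge> 1"
    and "S \<in> carrier_mat m m" and "invertible_mat S" and "mat_adjoint S = S"
    and "P \<in> carrier_mat m b" and "Q \<in> carrier_mat a b" and "R \<in> carrier_mat a m"
  shows
    "(\<exists>K>0. \<forall>k>K.
       (let X = X_mat m a b P Q R; MQ = M_Q a P Q R;
            G = minv (mat_adjoint X * X);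
            T = (\<lambda>j::nat. X * ((1 / (\<i> * complex_of_real k)) ^ (Suc j) \<cdot>\<^sub>m
                              ((G * S) ^\<^sub>m (Suc j))) * G * mat_adjoint X);
            C = - 1\<^sub>m n
                + 2 \<cdot>\<^sub>m (MQ * minv (1\<^sub>m a + R * mat_adjoint R + Q * mat_adjoint Q) * mat_adjoint MQ)
                + 2 \<cdot>\<^sub>m (X * G * mat_adjoint X)
        in \<forall>i<n. \<forall>l<n.
             (\<lambda>j. 2 * T j $$ (i, l)) sums (scat m a b P Q R S k $$ (i, l) - C $$ (i, l))))
     \<and> (\<forall>i<n. \<forall>l<n.
       ((\<lambda>k. scat m a b P Q R S k $$ (i, l)) \<longlongrightarrow>
          (1\<^sub>m n - 2 \<cdot>\<^sub>m (M_P b P Q R *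
             minv (1\<^sub>m b + mat_adjoint P * P + mat_adjoint (R * P - Q) * (R * P - Q))
             * mat_adjoint (M_P b P Q R))) $$ (i, l)) at_top)"
proof -
  interpret pq m a b P Q R S by (unfold_locales) (use assms in auto)
  have eqX: "X_mat m a b P Q R = X" by (simp add: X_def)
  have eqMQ: "M_Q a P Q R = MQ" by (simp add: MQ_def)
  have eqG: "minv (mat_adjoint X * X) = G" by (simp add: G_def F_def)
  have eqW: "minv (1\<^sub>m a + R * mat_adjoint R + Q * mat_adjoint Q) = W" by (simp add: W_def Wi_def)
  have eqC: "- 1\<^sub>m n + 2 \<cdot>\<^sub>m (MQ * W * mat_adjoint MQ) + 2 \<cdot>\<^sub>m (X * G * mat_adjoint X) = Cm"
    by (simp add: Cm_def n_def)
  have eqL: "1\<^sub>m n - 2 \<cdot>\<^sub>m (M_P b P Q R * minv (1\<^sub>m b + mat_adjoint P * P + mat_adjoint (R * P - Q) * (R * P - Q))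
             * mat_adjoint (M_P b P Q R)) = Lm"
    by (simp add: Lm_def MP_def Dinv_def D_def Tq_def n_def)
  have g0: "mn (G * S) \<ge> 0" by (rule mn_nonneg)
  show ?thesis
  proof
    show "\<exists>K>0. \<forall>k>K.
       (let X = X_mat m a b P Q R; MQ = M_Q a P Q R;
            G = minv (mat_adjoint X * X);
            T = (\<lambda>j::nat. X * ((1 / (\<i> * complex_of_real k)) ^ (Suc j) \<cdot>\<^sub>m
                              ((G * S) ^\<^sub>m (Suc j))) * G * mat_adjoint X);
            C = - 1\<^sub>m n
                + 2 \<cdot>\<^sub>m (MQ * minv (1\<^sub>m a + R * mat_adjoint R + Q * mat_adjoint Q) * mat_adjoint MQ)
                + 2 \<cdot>\<^sub>m (X * G * mat_adjoint X)
        in \<forall>i<n. \<forall>l<n.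
             (\<lambda>j. 2 * T j $$ (i, l)) sums (scat m a b P Q R S k $$ (i, l) - C $$ (i, l)))"
    proof (intro exI conjI allI impI)
      show "2 * mn (G * S) + 1 > 0" using g0 by linarith
      fix k :: real assume kk: "k > 2 * mn (G * S) + 1"
      have kpos: "k > 0" using kk g0 by linarith
      have k: "k \<noteq> 0" using kpos by simp
      have rk: "mn (Kk k) = mn (G * S) / k" unfolding mnKk cmod_tt using kpos by simp
      have r: "mn (Kk k) \<le> 1/2" unfolding rk using kk g0 kpos by (simp add: field_simps)
      show "let X = X_mat m a b P Q R; MQ = M_Q a P Q R;
            G = minv (mat_adjoint X * X);
            T = (\<lambda>j::nat. X * ((1 / (\<i> * complex_of_real k)) ^ (Suc j) \<cdot>\<^sub>m
                              ((G * S) ^\<^sub>m (Suc j))) * G * mat_adjoint X);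
            C = - 1\<^sub>m n
                + 2 \<cdot>\<^sub>m (MQ * minv (1\<^sub>m a + R * mat_adjoint R + Q * mat_adjoint Q) * mat_adjoint MQ)
                + 2 \<cdot>\<^sub>m (X * G * mat_adjoint X)
        in \<forall>i<n. \<forall>l<n.
             (\<lambda>j. 2 * T j $$ (i, l)) sums (scat m a b P Q R S k $$ (i, l) - C $$ (i, l))"
        unfolding Let_def eqX eqMQ eqG eqW eqC T_eq[OF k]
      proof (intro allI impI)
        fix i l assume i: "i < n" and l: "l < n"
        show "(\<lambda>j. 2 * (X * Kk k ^\<^sub>m Suc j * G * mat_adjoint X) $$ (i, l)) sums (scat m a b P Q R S k $$ (i, l) - Cm $$ (i, l))"
          by (rule part1_entry[OF kpos r], insert i l, simp_all add: n_def)
      qed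
    qed
    show "\<forall>i<n. \<forall>l<n.
       ((\<lambda>k. scat m a b P Q R S k $$ (i, l)) \<longlongrightarrow>
          (1\<^sub>m n - 2 \<cdot>\<^sub>m (M_P b P Q R *
             minv (1\<^sub>m b + mat_adjoint P * P + mat_adjoint (R * P - Q) * (R * P - Q))
             * mat_adjoint (M_P b P Q R))) $$ (i, l)) at_top"
      unfolding eqL
    proof (intro allI impI)
      fix i l assume i: "i < n" and l: "l < n"
      show "((\<lambda>k. scat m a b P Q R S k $$ (i, l)) \<longlongrightarrow> Lm $$ (i, l)) at_top"
        by (rule part2_entry, insert i l, simp_all add: n_def)
    qed
  qed
qed


end
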